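(* Let $W\in\mathbb{R}^{m\times n}$ have rows $w_1,\dots,w_m$ that are iid $\mathcal{N}(0,I_n)$ random vectors, and for each $i$ let $E_i$ be the event $\langle w_i,\sum_{k=1}^m w_k\rangle\ge 0$. Let $m,n\to\infty$ with $m/n=c$. Then for fixed $i\ne j$, $\mathbb{P}(E_i\cap E_j)\to\frac14\mathrm{erfc}\!\left(-\frac{1}{\sqrt{2c}}\right)^2$.
   Context: $\mathrm{erfc}(z)=1-\frac{2}{\sqrt\pi}\int_0^z e^{-t^2}\,dt$. *)

theory Defs
  imports "HOL-Probability.Probability"
begin

definition erfc :: "real \<Rightarrow> real" where
  "erfc z = 1 - 2 / sqrt pi * (LBINT t=ereal 0..ereal z. exp (- (t^2)))"

text \<open>Law of an m x n matrix W with iid standard normal entries; W(k,l) is the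
  l-th coordinate of the row w_k.\<close>
definition gauss_matrix :: "nat \<Rightarrow> nat \<Rightarrow> (nat \<times> nat \<Rightarrow> real) measure" where
  "gauss_matrix m n = PiM ({..<m} \<times> {..<n}) (\<lambda>_. density lborel std_normal_density)"

definition row_event :: "nat \<Rightarrow> nat \<Rightarrow> nat \<Rightarrow> (nat \<times> nat \<Rightarrow> real) set" where
  "row_event m n i = {W \<in> space (gauss_matrix m n).
      (\<Sum>l<n. W (i, l) * (\<Sum>k<m. W (k, l))) \<ge> 0}"

end

theory Submission
  imports Defs
begin


abbreviation G :: "real measure" where "G \<equiv> density lborel std_normal_density"

lemma prob_G: "prob_space G"
  by (rule prob_space_normal_density) simp

lemma gm_prob: "prob_space (gauss_matrix m n)"
  unfolding gauss_matrix_def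
  by (intro prob_space_PiM prob_G)

lemma PiG_coord_meas[measurable]:
  "(\<lambda>\<omega>. \<omega> q) \<in> borel_measurable (PiM I (\<lambda>_. G))"
proof (cases "q \<in> I")
  case True
  then have "(\<lambda>\<omega>. \<omega> q) \<in> measurable (PiM I (\<lambda>_. G)) G" by measurable
  then show ?thesis by (simp add: measurable_def)
next
  case False
  have "(\<lambda>\<omega>. undefined) \<in> borel_measurable (PiM I (\<lambda>_. G))" by simp
  then show ?thesis
    by (rule measurable_cong[THEN iffD1, rotated]) (use False in \<open>auto simp: space_PiM PiE_def extensional_def\<close>)
qed

lemma test: "(\<lambda>\<omega>. \<Sum>l<n. \<omega> (i,l) * (\<Sum>k<m. \<omega> (k, l))) \<in> borel_measurable (gauss_matrix m n)"
  unfolding gauss_matrix_def by measurable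




lemma PiG_prob: "prob_space (PiM I (\<lambda>_. G))"
  by (intro prob_space_PiM prob_G)

lemma PiG_coord_distr:
  assumes "q \<in> I"
  shows "distr (PiM I (\<lambda>_. G)) borel (\<lambda>\<omega>. \<omega> q) = G"
proof -
  have "distr (PiM I (\<lambda>_. G)) borel (\<lambda>\<omega>. \<omega> q) = distr (PiM I (\<lambda>_. G)) G (\<lambda>\<omega>. \<omega> q)"
    by (rule distr_cong) auto
  also have "\<dots> = G" by (rule distr_PiM_component[OF prob_G assms])
  finally show ?thesis .
qed

lemma PiG_coord_indep:
  "prob_space.indep_vars (PiM I (\<lambda>_. G)) (\<lambda>_. borel) (\<lambda>q \<omega>. \<omega> q) I"
proof -
  interpret P: prob_space "PiM I (\<lambda>_. G)" by (rule PiG_prob)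
  show ?thesis
  proof (cases "I = {}")
    case True
    show ?thesis unfolding P.indep_vars_def P.indep_sets_def using True by auto
  next
    case False
    have "distr (PiM I (\<lambda>_. G)) (PiM I (\<lambda>_. borel)) (\<lambda>x. \<lambda>i\<in>I. x i)
          = distr (PiM I (\<lambda>_. G)) (PiM I (\<lambda>_. borel)) (\<lambda>x. x)"
      by (rule distr_cong) (auto simp: space_PiM)
    also have "\<dots> = PiM I (\<lambda>_. G)"
      by (rule distr_id2) (intro sets_PiM_cong, auto)
    also have "\<dots> = PiM I (\<lambda>q. distr (PiM I (\<lambda>_. G)) borel (\<lambda>\<omega>. \<omega> q))"
      by (intro PiM_cong) (auto simp: PiG_coord_distr)
    finally show ?thesis
      by (subst P.indep_vars_iff_distr_eq_PiM'[OF False]) auto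
  qed
qed

lemma PiG_indep_groups:
  assumes "\<And>l. l \<in> L \<Longrightarrow> K l \<subseteq> I" "disjoint_family_on K L"
    "\<And>l. l\<in>L \<Longrightarrow> f l \<in> borel_measurable (PiM (K l) (\<lambda>_. borel))"
  shows "prob_space.indep_vars (PiM I (\<lambda>_. G)) (\<lambda>_. borel) (\<lambda>l \<omega>. f l (restrict \<omega> (K l))) L"
proof -
  interpret P: prob_space "PiM I (\<lambda>_. G)" by (rule PiG_prob)
  have "P.indep_vars (\<lambda>l. PiM (K l) (\<lambda>_. borel)) (\<lambda>l \<omega>. restrict (\<lambda>i. \<omega> i) (K l)) L"
    by (rule P.indep_vars_restrict[OF PiG_coord_indep assms(1,2)])
  then show ?thesis
    by (rule P.indep_vars_compose2) (use assms(3) in auto)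
qed

lemma PiG_indep_two:
  assumes "A \<inter> B = {}" "A \<subseteq> I" "B \<subseteq> I"
    "f \<in> measurable (PiM A (\<lambda>_. borel)) S" "g \<in> measurable (PiM B (\<lambda>_. borel)) T"
  shows "prob_space.indep_var (PiM I (\<lambda>_. G)) S (\<lambda>\<omega>. f (restrict \<omega> A)) T (\<lambda>\<omega>. g (restrict \<omega> B))"
proof -
  interpret P: prob_space "PiM I (\<lambda>_. G)" by (rule PiG_prob)
  have "P.indep_var (PiM A (\<lambda>_. borel)) (\<lambda>\<omega>. restrict (\<lambda>i. \<omega> i) A) (PiM B (\<lambda>_. borel)) (\<lambda>\<omega>. restrict (\<lambda>i. \<omega> i) B)"
    by (rule P.indep_var_restrict[OF PiG_coord_indep assms(1-3)])
  from P.indep_var_compose[OF this assms(4,5)] show ?thesis by (simp add: o_def)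
qed




lemma (in prob_space) indep_pair_integral_zero:
  fixes Z :: "'i \<Rightarrow> 'a \<Rightarrow> real"
  assumes "indep_vars (\<lambda>_. borel) Z L" "l \<in> L" "l' \<in> L" "l \<noteq> l'"
    "integrable M (Z l)" "integrable M (Z l')" "expectation (Z l) = 0"
  shows "expectation (\<lambda>\<omega>. Z l \<omega> * Z l' \<omega>) = 0"
    and "integrable M (\<lambda>\<omega>. Z l \<omega> * Z l' \<omega>)"
proof -
  have ind: "indep_vars (\<lambda>_. borel) Z {l, l'}"
    by (rule indep_vars_subset[OF assms(1)]) (use assms in auto)
  have int: "\<And>q. q \<in> {l,l'} \<Longrightarrow> integrable M (Z q)" using assms by auto
  have eq: "\<And>\<omega>. (\<Prod>q\<in>{l,l'}. Z q \<omega>) = Z l \<omega> * Z l' \<omega>" using assms(4) by simp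
  show "expectation (\<lambda>\<omega>. Z l \<omega> * Z l' \<omega>) = 0"
    using indep_vars_lebesgue_integral[OF _ ind int] assms(4,7) by (simp add: eq)
  show "integrable M (\<lambda>\<omega>. Z l \<omega> * Z l' \<omega>)"
    using indep_vars_integrable[OF _ ind int] by (simp add: eq)
qed

lemma (in prob_space) sum_sq_indep:
  fixes Z :: "'i \<Rightarrow> 'a \<Rightarrow> real"
  assumes fin: "finite L" and ind: "indep_vars (\<lambda>_. borel) Z L"
    and sq: "\<And>l. l\<in>L \<Longrightarrow> integrable M (\<lambda>\<omega>. (Z l \<omega>)^2)"
    and mean: "\<And>l. l\<in>L \<Longrightarrow> expectation (Z l) = 0"
  shows "expectation (\<lambda>\<omega>. (\<Sum>l\<in>L. Z l \<omega>)^2) = (\<Sum>l\<in>L. expectation (\<lambda>\<omega>. (Z l \<omega>)^2))"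
    and "integrable M (\<lambda>\<omega>. (\<Sum>l\<in>L. Z l \<omega>)^2)"
proof -
  have rv: "\<And>l. l \<in> L \<Longrightarrow> random_variable borel (Z l)"
    using ind unfolding indep_vars_def by auto
  have int1: "\<And>l. l\<in>L \<Longrightarrow> integrable M (Z l)"
    using square_integrable_imp_integrable rv sq by blast
  have int2: "integrable M (\<lambda>\<omega>. Z l \<omega> * Z l' \<omega>)" if "l \<in> L" "l' \<in> L" for l l'
  proof (cases "l = l'")
    case True then show ?thesis using sq[OF that(1)] by (simp add: power2_eq_square)
  next
    case False then show ?thesis
      using indep_pair_integral_zero(2)[OF ind that False int1 int1 mean] that by auto
  qed
  have e2: "expectation (\<lambda>\<omega>. Z l \<omega> * Z l' \<omega>) = (if l = l' then expectation (\<lambda>\<omega>. (Z l \<omega>)^2) else 0)"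
    if "l \<in> L" "l' \<in> L" for l l'
  proof (cases "l = l'")
    case True then show ?thesis by (simp add: power2_eq_square)
  next
    case False then show ?thesis
      using indep_pair_integral_zero(1)[OF ind that False int1 int1 mean] that by auto
  qed
  have sqeq: "\<And>\<omega>. (\<Sum>l\<in>L. Z l \<omega>)^2 = (\<Sum>l\<in>L. \<Sum>l'\<in>L. Z l \<omega> * Z l' \<omega>)"
    by (simp add: power2_eq_square sum_product)
  show "integrable M (\<lambda>\<omega>. (\<Sum>l\<in>L. Z l \<omega>)^2)"
    unfolding sqeq using int2 by (intro Bochner_Integration.integrable_sum) auto
  have "expectation (\<lambda>\<omega>. (\<Sum>l\<in>L. Z l \<omega>)^2) = (\<Sum>l\<in>L. \<Sum>l'\<in>L. expectation (\<lambda>\<omega>. Z l \<omega> * Z l' \<omega>))"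
    unfolding sqeq using int2
    by (subst Bochner_Integration.integral_sum) (auto intro!: Bochner_Integration.integrable_sum sum.cong Bochner_Integration.integral_sum)
  also have "\<dots> = (\<Sum>l\<in>L. \<Sum>l'\<in>L. (if l = l' then expectation (\<lambda>\<omega>. (Z l \<omega>)^2) else 0))"
    by (intro sum.cong refl e2) auto
  also have "\<dots> = (\<Sum>l\<in>L. expectation (\<lambda>\<omega>. (Z l \<omega>)^2))"
    using fin by (simp add: sum.delta)
  finally show "expectation (\<lambda>\<omega>. (\<Sum>l\<in>L. Z l \<omega>)^2) = (\<Sum>l\<in>L. expectation (\<lambda>\<omega>. (Z l \<omega>)^2))" .
qed

lemma (in prob_space) prob_sum_ge:
  fixes Z :: "'i \<Rightarrow> 'a \<Rightarrow> real"
  assumes fin: "finite L" and ind: "indep_vars (\<lambda>_. borel) Z L"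
    and sq: "\<And>l. l\<in>L \<Longrightarrow> integrable M (\<lambda>\<omega>. (Z l \<omega>)^2)"
    and mean: "\<And>l. l\<in>L \<Longrightarrow> expectation (Z l) = 0"
    and a: "a > 0"
  shows "prob {\<omega>\<in>space M. \<bar>\<Sum>l\<in>L. Z l \<omega>\<bar> \<ge> a} \<le> (\<Sum>l\<in>L. expectation (\<lambda>\<omega>. (Z l \<omega>)^2)) / a^2"
proof -
  have rv: "\<And>l. l \<in> L \<Longrightarrow> random_variable borel (Z l)"
    using ind unfolding indep_vars_def by auto
  have int1: "\<And>l. l\<in>L \<Longrightarrow> integrable M (Z l)"
    using square_integrable_imp_integrable rv sq by blast
  have rvs: "random_variable borel (\<lambda>\<omega>. \<Sum>l\<in>L. Z l \<omega>)"
    using rv by (intro borel_measurable_sum) auto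
  have e0: "expectation (\<lambda>\<omega>. \<Sum>l\<in>L. Z l \<omega>) = 0"
    using int1 mean by (subst Bochner_Integration.integral_sum) auto
  have "prob {\<omega>\<in>space M. \<bar>(\<Sum>l\<in>L. Z l \<omega>) - expectation (\<lambda>\<omega>. \<Sum>l\<in>L. Z l \<omega>)\<bar> \<ge> a}
     \<le> variance (\<lambda>\<omega>. \<Sum>l\<in>L. Z l \<omega>) / a^2"
    by (rule Chebyshev_inequality[OF rvs sum_sq_indep(2)[OF fin ind sq mean] a])
  then show ?thesis
    using sum_sq_indep(1)[OF fin ind sq mean] by (simp add: e0)
qed




lemma (in prob_space) indep_freeze:
  assumes ind: "indep_var T Y S X" and A: "A \<in> sets (T \<Otimes>\<^sub>M S)"
  shows "prob {\<omega>\<in>space M. (Y \<omega>, X \<omega>) \<in> A} = expectation (\<lambda>\<omega>. prob {\<omega>'\<in>space M. (Y \<omega>, X \<omega>') \<in> A})"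
    and "integrable M (\<lambda>\<omega>. prob {\<omega>'\<in>space M. (Y \<omega>, X \<omega>') \<in> A})"
proof -
  have rvY: "random_variable T Y" and rvX: "random_variable S X"
    using indep_var_rv1[OF ind] indep_var_rv2[OF ind] by auto
  have rvYX: "random_variable (T \<Otimes>\<^sub>M S) (\<lambda>\<omega>. (Y \<omega>, X \<omega>))" using rvY rvX by measurable
  interpret DX: prob_space "distr M S X" by (rule prob_space_distr[OF rvX])
  interpret DY: prob_space "distr M T Y" by (rule prob_space_distr[OF rvY])
  have A': "A \<in> sets (distr M T Y \<Otimes>\<^sub>M distr M S X)" using A by simp
  have slice: "emeasure (distr M S X) (Pair y -` A) = ennreal (prob {\<omega>'\<in>space M. (y, X \<omega>') \<in> A})" for y
  proof -
    have "Pair y -` A \<in> sets S" using A by (rule sets_Pair1)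
    then have "emeasure (distr M S X) (Pair y -` A) = emeasure M (X -` (Pair y -` A) \<inter> space M)"
      by (rule emeasure_distr[OF rvX])
    also have "X -` (Pair y -` A) \<inter> space M = {\<omega>'\<in>space M. (y, X \<omega>') \<in> A}" by auto
    finally show ?thesis by (simp add: emeasure_eq_measure)
  qed
  have mh0: "(\<lambda>y. emeasure (distr M S X) (Pair y -` A)) \<in> borel_measurable (distr M T Y)"
    by (rule DX.measurable_emeasure_Pair[OF A'])
  then have mh1: "(\<lambda>y. emeasure (distr M S X) (Pair y -` A)) \<in> borel_measurable T" by simp
  have mh: "(\<lambda>\<omega>. prob {\<omega>'\<in>space M. (Y \<omega>, X \<omega>') \<in> A}) \<in> borel_measurable M"
  proof -
    have "(\<lambda>\<omega>. enn2real (emeasure (distr M S X) (Pair (Y \<omega>) -` A))) \<in> borel_measurable M"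
      using mh1 rvY by measurable
    then show ?thesis by (simp add: slice)
  qed
  show int: "integrable M (\<lambda>\<omega>. prob {\<omega>'\<in>space M. (Y \<omega>, X \<omega>') \<in> A})"
    by (rule integrable_const_bound[where B=1]) (auto simp: mh)
  have "ennreal (prob {\<omega>\<in>space M. (Y \<omega>, X \<omega>) \<in> A}) = emeasure (distr M (T \<Otimes>\<^sub>M S) (\<lambda>\<omega>. (Y \<omega>, X \<omega>))) A"
    using A rvYX by (simp add: emeasure_distr emeasure_eq_measure vimage_def Int_def conj_commute)
  also have "distr M (T \<Otimes>\<^sub>M S) (\<lambda>\<omega>. (Y \<omega>, X \<omega>)) = distr M T Y \<Otimes>\<^sub>M distr M S X"
    using ind by (simp add: indep_var_distribution_eq)
  also have "emeasure (distr M T Y \<Otimes>\<^sub>M distr M S X) A = (\<integral>\<^sup>+y. emeasure (distr M S X) (Pair y -` A) \<partial>distr M T Y)"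
    by (rule DX.emeasure_pair_measure_alt[OF A'])
  also have "\<dots> = (\<integral>\<^sup>+\<omega>. emeasure (distr M S X) (Pair (Y \<omega>) -` A) \<partial>M)"
    by (rule nn_integral_distr[OF rvY mh0])
  also have "\<dots> = (\<integral>\<^sup>+\<omega>. ennreal (prob {\<omega>'\<in>space M. (Y \<omega>, X \<omega>') \<in> A}) \<partial>M)"
    by (simp add: slice)
  also have "\<dots> = ennreal (expectation (\<lambda>\<omega>. prob {\<omega>'\<in>space M. (Y \<omega>, X \<omega>') \<in> A}))"
    by (rule nn_integral_eq_integral[OF int]) auto
  finally show "prob {\<omega>\<in>space M. (Y \<omega>, X \<omega>) \<in> A} = expectation (\<lambda>\<omega>. prob {\<omega>'\<in>space M. (Y \<omega>, X \<omega>') \<in> A})"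
    by (subst (asm) ennreal_inj) (auto intro: integral_nonneg_AE)
qed




lemma (in prob_space) freeze_upper:
  assumes ind: "indep_var T Y S X" and A: "A \<in> sets (T \<Otimes>\<^sub>M S)" and Gd: "Gd \<in> sets T"
    and u: "u \<ge> 0" and bnd: "\<And>y. y \<in> space T \<Longrightarrow> y \<in> Gd \<Longrightarrow> prob {\<omega>'\<in>space M. (y, X \<omega>') \<in> A} \<le> u"
  shows "prob {\<omega>\<in>space M. (Y \<omega>, X \<omega>) \<in> A} \<le> u + prob {\<omega>\<in>space M. Y \<omega> \<notin> Gd}"
proof -
  have rvY: "random_variable T Y" using indep_var_rv1[OF ind] .
  have bad: "{\<omega>\<in>space M. Y \<omega> \<notin> Gd} \<in> events"
  proof -
    have "{\<omega>\<in>space M. Y \<omega> \<notin> Gd} = space M - (Y -` Gd \<inter> space M)" by auto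
    then show ?thesis using measurable_sets[OF rvY Gd] by auto
  qed
  have intbad: "integrable M (indicator {\<omega>\<in>space M. Y \<omega> \<notin> Gd} :: 'a \<Rightarrow> real)"
    by (rule integrable_real_indicator[OF bad]) (simp add: emeasure_eq_measure)
  let ?h = "\<lambda>\<omega>. prob {\<omega>'\<in>space M. (Y \<omega>, X \<omega>') \<in> A}"
  have "expectation ?h \<le> expectation (\<lambda>\<omega>. u + indicator {\<omega>\<in>space M. Y \<omega> \<notin> Gd} \<omega>)"
  proof (rule integral_mono)
    show "integrable M ?h" by (rule indep_freeze(2)[OF ind A])
    show "integrable M (\<lambda>\<omega>. u + indicator {\<omega>\<in>space M. Y \<omega> \<notin> Gd} \<omega>)"
      using intbad by (intro Bochner_Integration.integrable_add) (auto simp: emeasure_eq_measure)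
    fix \<omega> assume w: "\<omega> \<in> space M"
    show "?h \<omega> \<le> u + indicator {\<omega>\<in>space M. Y \<omega> \<notin> Gd} \<omega>"
    proof (cases "Y \<omega> \<in> Gd")
      case True then show ?thesis using bnd[of "Y \<omega>"] measurable_space[OF rvY w] by auto
    next
      case False then show ?thesis using w u by (auto intro: order_trans[OF prob_le_1])
    qed
  qed
  also have "\<dots> = u + prob {\<omega>\<in>space M. Y \<omega> \<notin> Gd}"
    using bad intbad by (subst Bochner_Integration.integral_add) (auto simp: prob_space)
  finally show ?thesis using indep_freeze(1)[OF ind A] by simp
qed

lemma (in prob_space) freeze_lower:
  assumes ind: "indep_var T Y S X" and A: "A \<in> sets (T \<Otimes>\<^sub>M S)" and Gd: "Gd \<in> sets T"
    and l: "l \<le> 1" and bnd: "\<And>y. y \<in> space T \<Longrightarrow> y \<in> Gd \<Longrightarrow> l \<le> prob {\<omega>'\<in>space M. (y, X \<omega>') \<in> A}"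
  shows "l - prob {\<omega>\<in>space M. Y \<omega> \<notin> Gd} \<le> prob {\<omega>\<in>space M. (Y \<omega>, X \<omega>) \<in> A}"
proof -
  have rvY: "random_variable T Y" using indep_var_rv1[OF ind] .
  have bad: "{\<omega>\<in>space M. Y \<omega> \<notin> Gd} \<in> events"
  proof -
    have "{\<omega>\<in>space M. Y \<omega> \<notin> Gd} = space M - (Y -` Gd \<inter> space M)" by auto
    then show ?thesis using measurable_sets[OF rvY Gd] by auto
  qed
  have intbad: "integrable M (indicator {\<omega>\<in>space M. Y \<omega> \<notin> Gd} :: 'a \<Rightarrow> real)"
    by (rule integrable_real_indicator[OF bad]) (simp add: emeasure_eq_measure)
  let ?h = "\<lambda>\<omega>. prob {\<omega>'\<in>space M. (Y \<omega>, X \<omega>') \<in> A}"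
  have "l - prob {\<omega>\<in>space M. Y \<omega> \<notin> Gd} = expectation (\<lambda>\<omega>. l - indicator {\<omega>\<in>space M. Y \<omega> \<notin> Gd} \<omega>)"
    using bad intbad by (subst Bochner_Integration.integral_diff) (auto simp: prob_space)
  also have "\<dots> \<le> expectation ?h"
  proof (rule integral_mono)
    show "integrable M ?h" by (rule indep_freeze(2)[OF ind A])
    show "integrable M (\<lambda>\<omega>. l - indicator {\<omega>\<in>space M. Y \<omega> \<notin> Gd} \<omega>)"
      using intbad by (intro Bochner_Integration.integrable_diff) (auto simp: emeasure_eq_measure)
    fix \<omega> assume w: "\<omega> \<in> space M"
    show "l - indicator {\<omega>\<in>space M. Y \<omega> \<notin> Gd} \<omega> \<le> ?h \<omega>"
    proof (cases "Y \<omega> \<in> Gd")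
      case True then show ?thesis using bnd[of "Y \<omega>"] measurable_space[OF rvY w] by auto
    next
      case False then show ?thesis using w l by (auto intro!: order_trans[OF _ measure_nonneg])
    qed
  qed
  finally show ?thesis using indep_freeze(1)[OF ind A] by simp
qed

lemma (in prob_space) normal_moments:
  assumes D: "distributed M lborel W (normal_density 0 s)" and s: "s > 0"
  shows "integrable M (\<lambda>\<omega>. W \<omega> ^ 2)" "integrable M (\<lambda>\<omega>. W \<omega> ^ 4)"
    "expectation (\<lambda>\<omega>. W \<omega> ^ 2) = s^2" "expectation (\<lambda>\<omega>. W \<omega> ^ 4) = 3 * s^4"
proof -
  have i2: "integrable lborel (\<lambda>x. normal_density 0 s x * x ^ (2*1))"
    using integrable_normal_moment[where k=2 and \<mu>=0 and \<sigma>=s] s by simp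
  have i4: "integrable lborel (\<lambda>x. normal_density 0 s x * x ^ (2*2))"
    using integrable_normal_moment[where k=4 and \<mu>=0 and \<sigma>=s] s by simp
  show "integrable M (\<lambda>\<omega>. W \<omega> ^ 2)"
    using distributed_integrable[OF D, of "\<lambda>x. x^2"] i2 by simp
  show "integrable M (\<lambda>\<omega>. W \<omega> ^ 4)"
    using distributed_integrable[OF D, of "\<lambda>x. x^4"] i4 by simp
  have "expectation (\<lambda>\<omega>. W \<omega> ^ 2) = (\<integral>x. normal_density 0 s x * x ^ (2*1) \<partial>lborel)"
    using distributed_integral[OF D, of "\<lambda>x. x^2"] by simp
  also have "\<dots> = s^2"
    using integral_normal_moment_even[where k=1 and \<mu>=0 and \<sigma>=s] s by (simp add: field_simps)
  finally show "expectation (\<lambda>\<omega>. W \<omega> ^ 2) = s^2" .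
  have "expectation (\<lambda>\<omega>. W \<omega> ^ 4) = (\<integral>x. normal_density 0 s x * x ^ (2*2) \<partial>lborel)"
    using distributed_integral[OF D, of "\<lambda>x. x^4"] by simp
  also have "\<dots> = 3 * s^4"
    using integral_normal_moment_even[where k=2 and \<mu>=0 and \<sigma>=s] s by (simp add: field_simps fact_numeral power2_eq_square power4_eq_xxxx)
  finally show "expectation (\<lambda>\<omega>. W \<omega> ^ 4) = 3 * s^4" .
qed

lemma PiG_coord_distributed:
  assumes "q \<in> I"
  shows "distributed (PiM I (\<lambda>_. G)) lborel (\<lambda>\<omega>. \<omega> q) (normal_density 0 1)"
proof -
  have "distr (PiM I (\<lambda>_. G)) lborel (\<lambda>\<omega>. \<omega> q) = distr (PiM I (\<lambda>_. G)) borel (\<lambda>\<omega>. \<omega> q)"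
    by (rule distr_cong) auto
  moreover have "(\<lambda>x. ennreal (normal_density 0 1 x)) \<in> borel_measurable borel" by simp
  then have "(\<lambda>x. ennreal (normal_density 0 1 x)) \<in> borel_measurable lborel" unfolding measurable_lborel2 .
  moreover have "(\<lambda>\<omega>. \<omega> q) \<in> measurable (PiM I (\<lambda>_. G)) lborel" using PiG_coord_meas[of q I] unfolding measurable_lborel1 .
  ultimately show ?thesis using PiG_coord_distr[OF assms]
    unfolding distributed_def by simp
qed




definition Phi :: "real \<Rightarrow> real" where "Phi x = measure G {-x..}"

lemma Phi_mono: "x \<le> y \<Longrightarrow> Phi x \<le> Phi y"
proof -
  assume "x \<le> y"
  interpret prob_space G by (rule prob_G)
  show ?thesis unfolding Phi_def using \<open>x \<le> y\<close> by (intro finite_measure_mono) auto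
qed

lemma Phi_nonneg: "0 \<le> Phi x" unfolding Phi_def by simp
lemma Phi_le1: "Phi x \<le> 1" unfolding Phi_def using prob_space.prob_le_1[OF prob_G] by simp

lemma PiG_gsum:
  fixes r :: "nat \<Rightarrow> real"
  assumes L: "finite L" and LI: "\<And>l. l \<in> L \<Longrightarrow> (i, l) \<in> I" and pos: "(\<Sum>l\<in>L. (r l)^2) > 0"
  shows "prob_space.prob (PiM I (\<lambda>_. G)) {\<omega>\<in>space (PiM I (\<lambda>_. G)). (\<Sum>l\<in>L. r l * \<omega> (i,l)) \<ge> -x}
          = Phi (x / sqrt (\<Sum>l\<in>L. (r l)^2))"
proof -
  interpret P: prob_space "PiM I (\<lambda>_. G)" by (rule PiG_prob)
  define L' where "L' = {l\<in>L. r l \<noteq> 0}"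
  have finL': "finite L'" using L by (simp add: L'_def)
  have sumL': "(\<Sum>l\<in>L. f l) = (\<Sum>l\<in>L'. f l)" if "\<And>l. r l = 0 \<Longrightarrow> f l = 0" for f :: "nat \<Rightarrow> real"
    unfolding L'_def using L that by (intro sum.mono_neutral_right) auto
  have ne: "L' \<noteq> {}"
  proof
    assume "L' = {}"
    then have "(\<Sum>l\<in>L. (r l)^2) = 0" using sumL'[of "\<lambda>l. (r l)^2"] by simp
    then show False using pos by simp
  qed
  have ind0: "P.indep_vars (\<lambda>_. borel) (\<lambda>l \<omega>. (\<lambda>y. r l * y (i,l)) (restrict \<omega> {(i,l)})) L'"
    by (rule PiG_indep_groups) (auto simp: L'_def LI disjoint_family_on_def)
  have ind: "P.indep_vars (\<lambda>_. borel) (\<lambda>l \<omega>. r l * \<omega> (i,l)) L'"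
    using ind0 by (rule P.indep_vars_cong[THEN iffD1, rotated 3]) auto
  have dist: "distributed (PiM I (\<lambda>_. G)) lborel (\<lambda>\<omega>. r l * \<omega> (i,l)) (normal_density 0 \<bar>r l\<bar>)"
    if "l \<in> L'" for l
  proof -
    have "(i,l) \<in> I" "r l \<noteq> 0" using that LI by (auto simp: L'_def)
    from P.normal_density_affine[OF PiG_coord_distributed[OF this(1)], of "r l" 0] this(2)
    show ?thesis by simp
  qed
  have D: "distributed (PiM I (\<lambda>_. G)) lborel (\<lambda>\<omega>. \<Sum>l\<in>L'. r l * \<omega> (i,l))
      (normal_density (\<Sum>l\<in>L'. 0) (sqrt (\<Sum>l\<in>L'. \<bar>r l\<bar>^2)))"
    by (rule P.sum_indep_normal[OF finL' ne ind]) (auto simp: L'_def dist)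
  define s where "s = sqrt (\<Sum>l\<in>L. (r l)^2)"
  have s: "s > 0" using pos by (simp add: s_def)
  have D2: "distributed (PiM I (\<lambda>_. G)) lborel (\<lambda>\<omega>. \<Sum>l\<in>L. r l * \<omega> (i,l)) (normal_density 0 s)"
  proof -
    have "(\<lambda>\<omega>. \<Sum>l\<in>L'. r l * \<omega> (i,l)) = (\<lambda>\<omega>. \<Sum>l\<in>L. r l * \<omega> (i,l))"
      by (rule ext, rule sumL'[symmetric]) simp
    moreover have "(\<Sum>l\<in>L'. \<bar>r l\<bar>^2) = (\<Sum>l\<in>L. (r l)^2)"
      by (subst sumL'[of "\<lambda>l. (r l)^2"]) auto
    ultimately show ?thesis using D by (simp add: s_def)
  qed
  have D3: "distributed (PiM I (\<lambda>_. G)) lborel (\<lambda>\<omega>. ((\<Sum>l\<in>L. r l * \<omega> (i,l)) - 0) / s) std_normal_density"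
    using P.normal_standard_normal_convert[OF s, THEN iffD1, OF D2] .
  let ?Z = "\<lambda>\<omega>. ((\<Sum>l\<in>L. r l * \<omega> (i,l)) - 0) / s"
  have "{\<omega>\<in>space (PiM I (\<lambda>_. G)). (\<Sum>l\<in>L. r l * \<omega> (i,l)) \<ge> -x}
      = ?Z -` {-(x/s)..} \<inter> space (PiM I (\<lambda>_. G))"
    using s by (auto simp: field_simps)
  then have "P.prob {\<omega>\<in>space (PiM I (\<lambda>_. G)). (\<Sum>l\<in>L. r l * \<omega> (i,l)) \<ge> -x}
      = measure (distr (PiM I (\<lambda>_. G)) lborel ?Z) {-(x/s)..}"
  proof -
    have mZ: "?Z \<in> measurable (PiM I (\<lambda>_. G)) lborel" using D3 by (simp add: distributed_def)
    have "measure (distr (PiM I (\<lambda>_. G)) lborel ?Z) {-(x/s)..} = P.prob (?Z -` {-(x/s)..} \<inter> space (PiM I (\<lambda>_. G)))"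
      by (rule measure_distr[OF mZ]) simp
    then show ?thesis using \<open>{\<omega>\<in>space (PiM I (\<lambda>_. G)). (\<Sum>l\<in>L. r l * \<omega> (i,l)) \<ge> -x} = _\<close> by simp
  qed
  also have "distr (PiM I (\<lambda>_. G)) lborel ?Z = G"
    using D3 by (simp add: distributed_def)
  finally show ?thesis by (simp add: Phi_def s_def)
qed




lemma PiG_coord_moments:
  assumes "q \<in> I"
  shows "integrable (PiM I (\<lambda>_. G)) (\<lambda>\<omega>. (\<omega> q)^2)" "integrable (PiM I (\<lambda>_. G)) (\<lambda>\<omega>. (\<omega> q)^4)"
    "integral\<^sup>L (PiM I (\<lambda>_. G)) (\<lambda>\<omega>. (\<omega> q)^2) = 1" "integral\<^sup>L (PiM I (\<lambda>_. G)) (\<lambda>\<omega>. (\<omega> q)^4) = 3"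
  using prob_space.normal_moments[OF PiG_prob PiG_coord_distributed[OF assms]] by auto

lemma PiG_coord_integrable:
  assumes "q \<in> I"
  shows "integrable (PiM I (\<lambda>_. G)) (\<lambda>\<omega>. \<omega> q)" "integral\<^sup>L (PiM I (\<lambda>_. G)) (\<lambda>\<omega>. \<omega> q) = 0"
proof -
  interpret P: prob_space "PiM I (\<lambda>_. G)" by (rule PiG_prob)
  show "integrable (PiM I (\<lambda>_. G)) (\<lambda>\<omega>. \<omega> q)"
    using P.square_integrable_imp_integrable[OF _ PiG_coord_moments(1)[OF assms]] by simp
  show "integral\<^sup>L (PiM I (\<lambda>_. G)) (\<lambda>\<omega>. \<omega> q) = 0"
    using P.normal_distributed_expectation[of 1 "\<lambda>\<omega>. \<omega> q" 0] PiG_coord_distributed[OF assms] by simp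
qed

lemma PiG_indep_prod_integral:
  fixes f g :: "real \<Rightarrow> real"
  assumes "q \<in> I" "q' \<in> I" "q \<noteq> q'"
    and f: "f \<in> borel_measurable borel" and g: "g \<in> borel_measurable borel"
    and fi: "integrable (PiM I (\<lambda>_. G)) (\<lambda>\<omega>. f (\<omega> q))" and gi: "integrable (PiM I (\<lambda>_. G)) (\<lambda>\<omega>. g (\<omega> q'))"
  shows "integral\<^sup>L (PiM I (\<lambda>_. G)) (\<lambda>\<omega>. f (\<omega> q) * g (\<omega> q'))
        = integral\<^sup>L (PiM I (\<lambda>_. G)) (\<lambda>\<omega>. f (\<omega> q)) * integral\<^sup>L (PiM I (\<lambda>_. G)) (\<lambda>\<omega>. g (\<omega> q'))"
    and "integrable (PiM I (\<lambda>_. G)) (\<lambda>\<omega>. f (\<omega> q) * g (\<omega> q'))"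
proof -
  interpret P: prob_space "PiM I (\<lambda>_. G)" by (rule PiG_prob)
  have i0: "P.indep_var borel (\<lambda>\<omega>. (\<lambda>y. f (y q)) (restrict \<omega> {q})) borel (\<lambda>\<omega>. (\<lambda>y. g (y q')) (restrict \<omega> {q'}))"
    by (rule PiG_indep_two) (use assms in auto)
  have i1: "P.indep_var borel (\<lambda>\<omega>. f (\<omega> q)) borel (\<lambda>\<omega>. g (\<omega> q'))"
    using i0 by simp
  show "integral\<^sup>L (PiM I (\<lambda>_. G)) (\<lambda>\<omega>. f (\<omega> q) * g (\<omega> q'))
        = integral\<^sup>L (PiM I (\<lambda>_. G)) (\<lambda>\<omega>. f (\<omega> q)) * integral\<^sup>L (PiM I (\<lambda>_. G)) (\<lambda>\<omega>. g (\<omega> q'))"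
    by (rule P.indep_var_lebesgue_integral[OF i1 fi gi])
  show "integrable (PiM I (\<lambda>_. G)) (\<lambda>\<omega>. f (\<omega> q) * g (\<omega> q'))"
    by (rule P.indep_var_integrable[OF i1 fi gi])
qed




lemma PiG_sq_dev:
  assumes I: "\<And>l. l < n \<Longrightarrow> (i,l) \<in> I" and a: "a > 0"
  shows "prob_space.prob (PiM I (\<lambda>_. G)) {\<omega>\<in>space (PiM I (\<lambda>_. G)). \<bar>(\<Sum>l<n. (\<omega> (i,l))^2) - real n\<bar> \<ge> a}
          \<le> 2 * real n / a^2"
proof -
  interpret P: prob_space "PiM I (\<lambda>_. G)" by (rule PiG_prob)
  define Z :: "nat \<Rightarrow> ('a \<times> nat \<Rightarrow> real) \<Rightarrow> real" where "Z l \<omega> = (\<omega> (i,l))^2 - 1" for l \<omega>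
  have ind0: "P.indep_vars (\<lambda>_. borel) (\<lambda>l \<omega>. (\<lambda>y. (y (i,l))^2 - 1) (restrict \<omega> {(i,l)})) {..<n}"
    by (rule PiG_indep_groups) (auto simp: I disjoint_family_on_def)
  have ind: "P.indep_vars (\<lambda>_. borel) Z {..<n}"
    using ind0 by (rule P.indep_vars_cong[THEN iffD1, rotated 3]) (auto simp: Z_def)
  have sqZ: "(Z l \<omega>)^2 = (\<omega> (i,l))^4 - 2 * (\<omega> (i,l))^2 + 1" for l \<omega>
    unfolding Z_def by (simp add: power2_eq_square power4_eq_xxxx algebra_simps)
  have sq: "integrable (PiM I (\<lambda>_. G)) (\<lambda>\<omega>. (Z l \<omega>)^2)" if "l \<in> {..<n}" for l
    unfolding sqZ using PiG_coord_moments[OF I] that by auto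
  have Esq: "P.expectation (\<lambda>\<omega>. (Z l \<omega>)^2) = 2" if "l \<in> {..<n}" for l
    unfolding sqZ using PiG_coord_moments[OF I] that
    by (simp add: Bochner_Integration.integral_diff Bochner_Integration.integral_add P.prob_space)
  have mean: "P.expectation (Z l) = 0" if "l \<in> {..<n}" for l
    unfolding Z_def using PiG_coord_moments[OF I] that
    by (simp add: Bochner_Integration.integral_diff P.prob_space)
  have "P.prob {\<omega>\<in>space (PiM I (\<lambda>_. G)). \<bar>\<Sum>l\<in>{..<n}. Z l \<omega>\<bar> \<ge> a}
       \<le> (\<Sum>l\<in>{..<n}. P.expectation (\<lambda>\<omega>. (Z l \<omega>)^2)) / a^2"
    by (rule P.prob_sum_ge[OF _ ind sq mean a]) auto
  also have "\<dots> = 2 * real n / a^2" using Esq by simp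
  finally show ?thesis by (simp add: Z_def sum_subtractf)
qed

lemma PiG_cross_dev:
  assumes I: "\<And>l. l < n \<Longrightarrow> (i,l) \<in> I" "\<And>l. l < n \<Longrightarrow> (j,l) \<in> I" and ij: "i \<noteq> j" and a: "a > 0"
  shows "prob_space.prob (PiM I (\<lambda>_. G)) {\<omega>\<in>space (PiM I (\<lambda>_. G)). \<bar>\<Sum>l<n. \<omega> (i,l) * \<omega> (j,l)\<bar> \<ge> a}
          \<le> real n / a^2"
proof -
  interpret P: prob_space "PiM I (\<lambda>_. G)" by (rule PiG_prob)
  define Z :: "nat \<Rightarrow> ('a \<times> nat \<Rightarrow> real) \<Rightarrow> real" where "Z l \<omega> = \<omega> (i,l) * \<omega> (j,l)" for l \<omega>
  have ind0: "P.indep_vars (\<lambda>_. borel) (\<lambda>l \<omega>. (\<lambda>y. y (i,l) * y (j,l)) (restrict \<omega> {(i,l),(j,l)})) {..<n}"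
    by (rule PiG_indep_groups) (auto simp: I disjoint_family_on_def)
  have ind: "P.indep_vars (\<lambda>_. borel) Z {..<n}"
    using ind0 by (rule P.indep_vars_cong[THEN iffD1, rotated 3]) (auto simp: Z_def)
  have ne: "(i,l) \<noteq> (j,l)" for l using ij by simp
  have sqZ: "(Z l \<omega>)^2 = (\<omega> (i,l))^2 * (\<omega> (j,l))^2" for l \<omega>
    unfolding Z_def by (simp add: power_mult_distrib)
  have sq: "integrable (PiM I (\<lambda>_. G)) (\<lambda>\<omega>. (Z l \<omega>)^2)" if "l \<in> {..<n}" for l
  proof -
    have qi: "(i,l) \<in> I" and qj: "(j,l) \<in> I" using that I by auto
    show ?thesis
      unfolding sqZ using PiG_indep_prod_integral(2)[OF qi qj ne, of "\<lambda>x. x^2" "\<lambda>x. x^2"]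
        PiG_coord_moments[OF qi] PiG_coord_moments[OF qj] by auto
  qed
  have Esq: "P.expectation (\<lambda>\<omega>. (Z l \<omega>)^2) = 1" if "l \<in> {..<n}" for l
  proof -
    have qi: "(i,l) \<in> I" and qj: "(j,l) \<in> I" using that I by auto
    show ?thesis
      unfolding sqZ using PiG_indep_prod_integral(1)[OF qi qj ne, of "\<lambda>x. x^2" "\<lambda>x. x^2"]
        PiG_coord_moments[OF qi] PiG_coord_moments[OF qj] by auto
  qed
  have mean: "P.expectation (Z l) = 0" if "l \<in> {..<n}" for l
  proof -
    have qi: "(i,l) \<in> I" and qj: "(j,l) \<in> I" using that I by auto
    show ?thesis
      unfolding Z_def using PiG_indep_prod_integral(1)[OF qi qj ne, of "\<lambda>x. x" "\<lambda>x. x"]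
        PiG_coord_integrable[OF qi] PiG_coord_integrable[OF qj] by auto
  qed
  have "P.prob {\<omega>\<in>space (PiM I (\<lambda>_. G)). \<bar>\<Sum>l\<in>{..<n}. Z l \<omega>\<bar> \<ge> a}
       \<le> (\<Sum>l\<in>{..<n}. P.expectation (\<lambda>\<omega>. (Z l \<omega>)^2)) / a^2"
    by (rule P.prob_sum_ge[OF _ ind sq mean a]) auto
  also have "\<dots> = real n / a^2" using Esq by simp
  finally show ?thesis by (simp add: Z_def)
qed




lemma PiG_colsum_distributed:
  assumes K: "finite K" "K \<noteq> {}" and KI: "\<And>k. k \<in> K \<Longrightarrow> (k,l) \<in> I"
  shows "distributed (PiM I (\<lambda>_. G)) lborel (\<lambda>\<omega>. \<Sum>k\<in>K. \<omega> (k,l)) (normal_density 0 (sqrt (real (card K))))"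
proof -
  interpret P: prob_space "PiM I (\<lambda>_. G)" by (rule PiG_prob)
  have ind0: "P.indep_vars (\<lambda>_. borel) (\<lambda>k \<omega>. (\<lambda>y. y (k,l)) (restrict \<omega> {(k,l)})) K"
    by (rule PiG_indep_groups) (auto simp: KI disjoint_family_on_def)
  have ind: "P.indep_vars (\<lambda>_. borel) (\<lambda>k \<omega>. \<omega> (k,l)) K"
    using ind0 by (rule P.indep_vars_cong[THEN iffD1, rotated 3]) auto
  have "distributed (PiM I (\<lambda>_. G)) lborel (\<lambda>\<omega>. \<Sum>k\<in>K. \<omega> (k,l))
      (normal_density (\<Sum>k\<in>K. 0) (sqrt (\<Sum>k\<in>K. 1^2)))"
    by (rule P.sum_indep_normal[OF K ind]) (auto simp: KI PiG_coord_distributed)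
  then show ?thesis by simp
qed

lemma PiG_R_dev:
  assumes K: "finite K" "K \<noteq> {}" and KI: "\<And>k l. k \<in> K \<Longrightarrow> l < n \<Longrightarrow> (k,l) \<in> I" and a: "a > 0"
  shows "prob_space.prob (PiM I (\<lambda>_. G))
     {\<omega>\<in>space (PiM I (\<lambda>_. G)). \<bar>(\<Sum>l<n. (\<Sum>k\<in>K. \<omega> (k,l))^2) - real n * real (card K)\<bar> \<ge> a}
          \<le> 2 * real n * (real (card K))^2 / a^2"
proof -
  interpret P: prob_space "PiM I (\<lambda>_. G)" by (rule PiG_prob)
  define s where "s = sqrt (real (card K))"
  have s: "s > 0" using K by (simp add: s_def card_gt_0_iff)
  have s2: "s^2 = real (card K)" by (simp add: s_def)
  define Z :: "nat \<Rightarrow> ('a \<times> nat \<Rightarrow> real) \<Rightarrow> real" where "Z l \<omega> = (\<Sum>k\<in>K. \<omega> (k,l))^2 - real (card K)" for l \<omega>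
  have ind0: "P.indep_vars (\<lambda>_. borel) (\<lambda>l \<omega>. (\<lambda>y. (\<Sum>k\<in>K. y (k,l))^2 - real (card K)) (restrict \<omega> (K \<times> {l}))) {..<n}"
    by (rule PiG_indep_groups) (auto simp: KI disjoint_family_on_def)
  have ind: "P.indep_vars (\<lambda>_. borel) Z {..<n}"
    using ind0 by (rule P.indep_vars_cong[THEN iffD1, rotated 3]) (auto simp: Z_def)
  have sqZ: "(Z l \<omega>)^2 = (\<Sum>k\<in>K. \<omega> (k,l))^4 - 2 * real (card K) * (\<Sum>k\<in>K. \<omega> (k,l))^2 + (real (card K))^2" for l \<omega>
    unfolding Z_def by (simp add: power2_eq_square power4_eq_xxxx algebra_simps)
  have mom: "integrable (PiM I (\<lambda>_. G)) (\<lambda>\<omega>. (\<Sum>k\<in>K. \<omega> (k,l))^2)"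
     "integrable (PiM I (\<lambda>_. G)) (\<lambda>\<omega>. (\<Sum>k\<in>K. \<omega> (k,l))^4)"
     "P.expectation (\<lambda>\<omega>. (\<Sum>k\<in>K. \<omega> (k,l))^2) = real (card K)"
     "P.expectation (\<lambda>\<omega>. (\<Sum>k\<in>K. \<omega> (k,l))^4) = 3 * (real (card K))^2"
    if "l \<in> {..<n}" for l
  proof -
    have D: "distributed (PiM I (\<lambda>_. G)) lborel (\<lambda>\<omega>. \<Sum>k\<in>K. \<omega> (k,l)) (normal_density 0 s)"
      unfolding s_def by (rule PiG_colsum_distributed[OF K]) (use that KI in auto)
    note M = P.normal_moments[OF D s]
    show "integrable (PiM I (\<lambda>_. G)) (\<lambda>\<omega>. (\<Sum>k\<in>K. \<omega> (k,l))^2)"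
     "integrable (PiM I (\<lambda>_. G)) (\<lambda>\<omega>. (\<Sum>k\<in>K. \<omega> (k,l))^4)" using M by auto
    show "P.expectation (\<lambda>\<omega>. (\<Sum>k\<in>K. \<omega> (k,l))^2) = real (card K)" using M(3) s2 by simp
    have "s^4 = (s^2)^2" by simp
    then show "P.expectation (\<lambda>\<omega>. (\<Sum>k\<in>K. \<omega> (k,l))^4) = 3 * (real (card K))^2" using M(4) s2 by simp
  qed
  have sq: "integrable (PiM I (\<lambda>_. G)) (\<lambda>\<omega>. (Z l \<omega>)^2)" if "l \<in> {..<n}" for l
    unfolding sqZ using mom[OF that] by auto
  have Esq: "P.expectation (\<lambda>\<omega>. (Z l \<omega>)^2) = 2 * (real (card K))^2" if "l \<in> {..<n}" for l
    unfolding sqZ using mom[OF that]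
    by (simp add: Bochner_Integration.integral_diff Bochner_Integration.integral_add P.prob_space power2_eq_square)
  have mean: "P.expectation (Z l) = 0" if "l \<in> {..<n}" for l
    unfolding Z_def using mom[OF that]
    by (simp add: Bochner_Integration.integral_diff P.prob_space)
  have "P.prob {\<omega>\<in>space (PiM I (\<lambda>_. G)). \<bar>\<Sum>l\<in>{..<n}. Z l \<omega>\<bar> \<ge> a}
       \<le> (\<Sum>l\<in>{..<n}. P.expectation (\<lambda>\<omega>. (Z l \<omega>)^2)) / a^2"
    by (rule P.prob_sum_ge[OF _ ind sq mean a]) auto
  also have "\<dots> = 2 * real n * (real (card K))^2 / a^2" using Esq by simp
  finally show ?thesis by (simp add: Z_def sum_subtractf)
qed




lemma PiB_coord_meas[measurable]:
  "(\<lambda>\<omega>. \<omega> q) \<in> borel_measurable (PiM J (\<lambda>_. (borel :: real measure)))"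
proof (cases "q \<in> J")
  case True
  then show ?thesis by measurable
next
  case False
  have "(\<lambda>\<omega>. undefined) \<in> borel_measurable (PiM J (\<lambda>_. (borel :: real measure)))" by simp
  then show ?thesis
    by (rule measurable_cong[THEN iffD1, rotated]) (use False in \<open>auto simp: space_PiM PiE_def extensional_def\<close>)
qed

definition Bad :: "nat \<Rightarrow> nat \<Rightarrow> nat \<Rightarrow> real \<Rightarrow> (nat \<times> nat \<Rightarrow> real) set" where
  "Bad n i j d = {\<omega>. \<bar>(\<Sum>l<n. (\<omega> (i,l))^2) - real n\<bar> \<ge> d \<or> \<bar>(\<Sum>l<n. (\<omega> (j,l))^2) - real n\<bar> \<ge> d
      \<or> \<bar>\<Sum>l<n. \<omega> (i,l) * \<omega> (j,l)\<bar> \<ge> d}"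

lemma bad_bound:
  assumes I: "\<And>l. l < n \<Longrightarrow> (i,l) \<in> I" "\<And>l. l < n \<Longrightarrow> (j,l) \<in> I" and ij: "i \<noteq> j"
    and d: "d > 0" and n: "n > 0"
  shows "prob_space.prob (PiM I (\<lambda>_. G)) (Bad n i j (d * real n / 2) \<inter> space (PiM I (\<lambda>_. G))) \<le> 20 / (d^2 * real n)"
proof -
  interpret P: prob_space "PiM I (\<lambda>_. G)" by (rule PiG_prob)
  let ?S = "space (PiM I (\<lambda>_. G))"
  let ?a = "d * real n / 2"
  have a: "?a > 0" using d n by simp
  have eq: "Bad n i j ?a \<inter> ?S = ({\<omega>\<in>?S. \<bar>(\<Sum>l<n. (\<omega> (i,l))^2) - real n\<bar> \<ge> ?a} \<union>
       {\<omega>\<in>?S. \<bar>(\<Sum>l<n. (\<omega> (j,l))^2) - real n\<bar> \<ge> ?a}) \<union> {\<omega>\<in>?S. \<bar>\<Sum>l<n. \<omega> (i,l) * \<omega> (j,l)\<bar> \<ge> ?a}"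
    unfolding Bad_def by auto
  have "P.prob (Bad n i j ?a \<inter> ?S) \<le> P.prob ({\<omega>\<in>?S. \<bar>(\<Sum>l<n. (\<omega> (i,l))^2) - real n\<bar> \<ge> ?a} \<union>
       {\<omega>\<in>?S. \<bar>(\<Sum>l<n. (\<omega> (j,l))^2) - real n\<bar> \<ge> ?a}) + P.prob {\<omega>\<in>?S. \<bar>\<Sum>l<n. \<omega> (i,l) * \<omega> (j,l)\<bar> \<ge> ?a}"
    unfolding eq by (rule measure_Un_le) measurable
  also have "\<dots> \<le> (P.prob {\<omega>\<in>?S. \<bar>(\<Sum>l<n. (\<omega> (i,l))^2) - real n\<bar> \<ge> ?a} +
       P.prob {\<omega>\<in>?S. \<bar>(\<Sum>l<n. (\<omega> (j,l))^2) - real n\<bar> \<ge> ?a}) + P.prob {\<omega>\<in>?S. \<bar>\<Sum>l<n. \<omega> (i,l) * \<omega> (j,l)\<bar> \<ge> ?a}"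
    by (intro add_mono measure_Un_le order_refl) measurable
  also have "\<dots> \<le> (2 * real n / ?a^2 + 2 * real n / ?a^2) + real n / ?a^2"
    by (intro add_mono PiG_sq_dev PiG_cross_dev I ij a)
  also have "\<dots> = 20 / (d^2 * real n)"
    using n d by (simp add: power2_eq_square divide_simps)
  finally show ?thesis .
qed

lemma pair_gauss_prob:
  fixes r :: "nat \<Rightarrow> real"
  assumes I: "\<And>l. l < n \<Longrightarrow> (i,l) \<in> I" "\<And>l. l < n \<Longrightarrow> (j,l) \<in> I" and ij: "i \<noteq> j"
    and pos: "(\<Sum>l<n. (r l)^2) > 0"
  shows "prob_space.prob (PiM I (\<lambda>_. G)) {\<omega>\<in>space (PiM I (\<lambda>_. G)).
            (\<Sum>l<n. r l * \<omega> (i,l)) \<ge> -x \<and> (\<Sum>l<n. r l * \<omega> (j,l)) \<ge> -x}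
       = (Phi (x / sqrt (\<Sum>l<n. (r l)^2)))^2"
proof -
  interpret P: prob_space "PiM I (\<lambda>_. G)" by (rule PiG_prob)
  have i0: "P.indep_var borel (\<lambda>\<omega>. (\<lambda>y. \<Sum>l<n. r l * y (i,l)) (restrict \<omega> ({i}\<times>{..<n})))
                        borel (\<lambda>\<omega>. (\<lambda>y. \<Sum>l<n. r l * y (j,l)) (restrict \<omega> ({j}\<times>{..<n})))"
    by (rule PiG_indep_two) (use I ij in auto)
  have i1: "P.indep_var borel (\<lambda>\<omega>. \<Sum>l<n. r l * \<omega> (i,l)) borel (\<lambda>\<omega>. \<Sum>l<n. r l * \<omega> (j,l))"
    using i0 by simp
  have "P.prob {\<omega>\<in>space (PiM I (\<lambda>_. G)). (\<Sum>l<n. r l * \<omega> (i,l)) \<in> {-x..} \<and> (\<Sum>l<n. r l * \<omega> (j,l)) \<in> {-x..}}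
     = P.prob {\<omega>\<in>space (PiM I (\<lambda>_. G)). (\<Sum>l<n. r l * \<omega> (i,l)) \<in> {-x..}}
     * P.prob {\<omega>\<in>space (PiM I (\<lambda>_. G)). (\<Sum>l<n. r l * \<omega> (j,l)) \<in> {-x..}}"
    by (rule P.prob_indep_random_variable[OF i1]) auto
  also have "\<dots> = Phi (x / sqrt (\<Sum>l<n. (r l)^2)) * Phi (x / sqrt (\<Sum>l<n. (r l)^2))"
  proof -
    have g1: "P.prob {\<omega>\<in>space (PiM I (\<lambda>_. G)). (\<Sum>l<n. r l * \<omega> (i,l)) \<ge> -x} = Phi (x / sqrt (\<Sum>l<n. (r l)^2))"
      by (rule PiG_gsum[OF finite_lessThan]) (use I pos in auto)
    have g2: "P.prob {\<omega>\<in>space (PiM I (\<lambda>_. G)). (\<Sum>l<n. r l * \<omega> (j,l)) \<ge> -x} = Phi (x / sqrt (\<Sum>l<n. (r l)^2))"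
      by (rule PiG_gsum[OF finite_lessThan]) (use I pos in auto)
    show ?thesis using g1 g2 by (simp only: atLeast_iff)
  qed
  finally show ?thesis by (simp add: power2_eq_square)
qed




definition Fev :: "nat \<Rightarrow> nat \<Rightarrow> nat \<Rightarrow> (nat \<Rightarrow> real) \<Rightarrow> (nat \<times> nat \<Rightarrow> real) \<Rightarrow> bool" where
  "Fev n i j r \<omega> \<longleftrightarrow> (\<Sum>l<n. \<omega> (i,l) * (\<omega> (i,l) + \<omega> (j,l) + r l)) \<ge> 0
      \<and> (\<Sum>l<n. \<omega> (j,l) * (\<omega> (i,l) + \<omega> (j,l) + r l)) \<ge> 0"

lemma sum_expand3:
  fixes f g r :: "nat \<Rightarrow> real"
  shows "(\<Sum>l<n. f l * (f l + g l + r l)) = (\<Sum>l<n. (f l)^2) + (\<Sum>l<n. f l * g l) + (\<Sum>l<n. r l * f l)"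
proof -
  have "(\<Sum>l<n. f l * (f l + g l + r l)) = (\<Sum>l<n. (f l)^2 + f l * g l + r l * f l)"
    by (rule sum.cong) (simp_all add: power2_eq_square, algebra)
  then show ?thesis by (simp add: sum.distrib)
qed

lemma Fev_expand:
  fixes \<omega> :: "nat \<times> nat \<Rightarrow> real" and r :: "nat \<Rightarrow> real"
  shows "(\<Sum>l<n. \<omega> (i,l) * (\<omega> (i,l) + \<omega> (j,l) + r l)) = (\<Sum>l<n. (\<omega> (i,l))^2) + (\<Sum>l<n. \<omega> (i,l) * \<omega> (j,l)) + (\<Sum>l<n. r l * \<omega> (i,l))"
  "(\<Sum>l<n. \<omega> (j,l) * (\<omega> (i,l) + \<omega> (j,l) + r l)) = (\<Sum>l<n. (\<omega> (j,l))^2) + (\<Sum>l<n. \<omega> (i,l) * \<omega> (j,l)) + (\<Sum>l<n. r l * \<omega> (j,l))"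
proof -
  show "(\<Sum>l<n. \<omega> (i,l) * (\<omega> (i,l) + \<omega> (j,l) + r l)) = (\<Sum>l<n. (\<omega> (i,l))^2) + (\<Sum>l<n. \<omega> (i,l) * \<omega> (j,l)) + (\<Sum>l<n. r l * \<omega> (i,l))"
    using sum_expand3[of "\<lambda>l. \<omega> (i,l)" "\<lambda>l. \<omega> (j,l)" r n] by simp
  have "(\<Sum>l<n. \<omega> (j,l) * (\<omega> (i,l) + \<omega> (j,l) + r l)) = (\<Sum>l<n. \<omega> (j,l) * (\<omega> (j,l) + \<omega> (i,l) + r l))"
    by (simp add: add.commute)
  also have "\<dots> = (\<Sum>l<n. (\<omega> (j,l))^2) + (\<Sum>l<n. \<omega> (j,l) * \<omega> (i,l)) + (\<Sum>l<n. r l * \<omega> (j,l))"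
    using sum_expand3[of "\<lambda>l. \<omega> (j,l)" "\<lambda>l. \<omega> (i,l)" r n] by simp
  finally show "(\<Sum>l<n. \<omega> (j,l) * (\<omega> (i,l) + \<omega> (j,l) + r l)) = (\<Sum>l<n. (\<omega> (j,l))^2) + (\<Sum>l<n. \<omega> (i,l) * \<omega> (j,l)) + (\<Sum>l<n. r l * \<omega> (j,l))"
    by (simp add: mult.commute)
qed

lemma inner_upper:
  fixes r :: "nat \<Rightarrow> real"
  assumes I: "\<And>l. l < n \<Longrightarrow> (i,l) \<in> I" "\<And>l. l < n \<Longrightarrow> (j,l) \<in> I" and ij: "i \<noteq> j"
    and pos: "(\<Sum>l<n. (r l)^2) > 0" and d: "d > 0" and n: "n > 0"
  shows "prob_space.prob (PiM I (\<lambda>_. G)) {\<omega>\<in>space (PiM I (\<lambda>_. G)). Fev n i j r \<omega>}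
     \<le> (Phi ((1+d) * real n / sqrt (\<Sum>l<n. (r l)^2)))^2 + 20 / (d^2 * real n)"
proof -
  interpret P: prob_space "PiM I (\<lambda>_. G)" by (rule PiG_prob)
  let ?S = "space (PiM I (\<lambda>_. G))"
  let ?a = "d * real n / 2"
  let ?x = "(1+d) * real n"
  let ?GG = "{\<omega>\<in>?S. (\<Sum>l<n. r l * \<omega> (i,l)) \<ge> -?x \<and> (\<Sum>l<n. r l * \<omega> (j,l)) \<ge> -?x}"
  have sub: "{\<omega>\<in>?S. Fev n i j r \<omega>} \<subseteq> ?GG \<union> (Bad n i j ?a \<inter> ?S)"
  proof safe
    fix \<omega> assume w: "\<omega> \<in> ?S" and F: "Fev n i j r \<omega>" and nb: "\<omega> \<notin> Bad n i j ?a"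
    have "\<bar>(\<Sum>l<n. (\<omega> (i,l))^2) - real n\<bar> < ?a" "\<bar>(\<Sum>l<n. (\<omega> (j,l))^2) - real n\<bar> < ?a"
      "\<bar>\<Sum>l<n. \<omega> (i,l) * \<omega> (j,l)\<bar> < ?a" using nb unfolding Bad_def by auto
    moreover note F[unfolded Fev_def Fev_expand]
    ultimately show "(\<Sum>l<n. r l * \<omega> (i,l)) \<ge> -?x" "(\<Sum>l<n. r l * \<omega> (j,l)) \<ge> -?x"
      unfolding abs_less_iff by (simp_all only: distrib_right mult_1_left; linarith)+
  qed
  have "P.prob {\<omega>\<in>?S. Fev n i j r \<omega>} \<le> P.prob (?GG \<union> (Bad n i j ?a \<inter> ?S))"
    by (rule P.finite_measure_mono[OF sub]) (unfold Bad_def, measurable)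
  also have "\<dots> \<le> P.prob ?GG + P.prob (Bad n i j ?a \<inter> ?S)"
    by (rule measure_Un_le) (unfold Bad_def, measurable)
  also have "\<dots> \<le> (Phi (?x / sqrt (\<Sum>l<n. (r l)^2)))^2 + 20 / (d^2 * real n)"
    by (intro add_mono bad_bound[OF I ij d n] pair_gauss_prob[OF I ij pos, THEN eq_refl])
  finally show ?thesis .
qed

lemma inner_lower:
  fixes r :: "nat \<Rightarrow> real"
  assumes I: "\<And>l. l < n \<Longrightarrow> (i,l) \<in> I" "\<And>l. l < n \<Longrightarrow> (j,l) \<in> I" and ij: "i \<noteq> j"
    and pos: "(\<Sum>l<n. (r l)^2) > 0" and d: "d > 0" and n: "n > 0"
  shows "(Phi ((1-d) * real n / sqrt (\<Sum>l<n. (r l)^2)))^2 - 20 / (d^2 * real n)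
     \<le> prob_space.prob (PiM I (\<lambda>_. G)) {\<omega>\<in>space (PiM I (\<lambda>_. G)). Fev n i j r \<omega>}"
proof -
  interpret P: prob_space "PiM I (\<lambda>_. G)" by (rule PiG_prob)
  let ?S = "space (PiM I (\<lambda>_. G))"
  let ?a = "d * real n / 2"
  let ?x = "(1-d) * real n"
  let ?GG = "{\<omega>\<in>?S. (\<Sum>l<n. r l * \<omega> (i,l)) \<ge> -?x \<and> (\<Sum>l<n. r l * \<omega> (j,l)) \<ge> -?x}"
  have sub: "?GG \<subseteq> {\<omega>\<in>?S. Fev n i j r \<omega>} \<union> (Bad n i j ?a \<inter> ?S)"
  proof safe
    fix \<omega> assume w: "\<omega> \<in> ?S" and g1: "(\<Sum>l<n. r l * \<omega> (i,l)) \<ge> -?x" and g2: "(\<Sum>l<n. r l * \<omega> (j,l)) \<ge> -?x"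
      and nb: "\<omega> \<notin> Bad n i j ?a"
    have "\<bar>(\<Sum>l<n. (\<omega> (i,l))^2) - real n\<bar> < ?a" "\<bar>(\<Sum>l<n. (\<omega> (j,l))^2) - real n\<bar> < ?a"
      "\<bar>\<Sum>l<n. \<omega> (i,l) * \<omega> (j,l)\<bar> < ?a" using nb unfolding Bad_def by auto
    with g1 g2 show "Fev n i j r \<omega>"
      unfolding Fev_def Fev_expand abs_less_iff left_diff_distrib mult_1_left by linarith
  qed
  have "(Phi (?x / sqrt (\<Sum>l<n. (r l)^2)))^2 = P.prob ?GG"
    by (rule pair_gauss_prob[OF I ij pos, symmetric])
  also have "\<dots> \<le> P.prob ({\<omega>\<in>?S. Fev n i j r \<omega>} \<union> (Bad n i j ?a \<inter> ?S))"
    by (rule P.finite_measure_mono[OF sub]) (unfold Bad_def Fev_def, measurable)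
  also have "\<dots> \<le> P.prob {\<omega>\<in>?S. Fev n i j r \<omega>} + P.prob (Bad n i j ?a \<inter> ?S)"
    by (rule measure_Un_le) (unfold Bad_def Fev_def, measurable)
  also have "\<dots> \<le> P.prob {\<omega>\<in>?S. Fev n i j r \<omega>} + 20 / (d^2 * real n)"
    by (intro add_mono bad_bound[OF I ij d n] order_refl)
  finally show ?thesis by simp
qed




lemma Fev_cong:
  assumes "\<And>l. l < n \<Longrightarrow> r l = r' l" "\<And>l. l < n \<Longrightarrow> x (i,l) = x' (i,l)" "\<And>l. l < n \<Longrightarrow> x (j,l) = x' (j,l)"
  shows "Fev n i j r x = Fev n i j r' x'"
proof -
  have "(\<Sum>l<n. x (i,l) * (x (i,l) + x (j,l) + r l)) = (\<Sum>l<n. x' (i,l) * (x' (i,l) + x' (j,l) + r' l))"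
    by (rule sum.cong) (simp_all add: assms)
  moreover have "(\<Sum>l<n. x (j,l) * (x (i,l) + x (j,l) + r l)) = (\<Sum>l<n. x' (j,l) * (x' (i,l) + x' (j,l) + r' l))"
    by (rule sum.cong) (simp_all add: assms)
  ultimately show ?thesis unfolding Fev_def by simp
qed

lemma main_bounds:
  assumes ij: "i < m" "j < m" "i \<noteq> j" and m: "3 \<le> m" and n: "n > 0"
    and d: "0 < d" "d < 1" and e: "0 < e" "e < 1"
  shows "measure (gauss_matrix m n) (row_event m n i \<inter> row_event m n j)
      \<le> (Phi ((1+d) * real n / sqrt ((1-e) * (real n * (real m - 2)))))^2 + 20 / (d^2 * real n) + 2 / (e^2 * real n)"
    and "(Phi ((1-d) * real n / sqrt ((1+e) * (real n * (real m - 2)))))^2 - 20 / (d^2 * real n) - 2 / (e^2 * real n)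
      \<le> measure (gauss_matrix m n) (row_event m n i \<inter> row_event m n j)"
proof -
  define I where "I = {..<m} \<times> {..<n}"
  interpret P: prob_space "PiM I (\<lambda>_. G)" by (rule PiG_prob)
  define K where "K = {..<m} - {i,j}"
  define JR where "JR = K \<times> {..<n}"
  define Jab where "Jab = {i,j} \<times> {..<n}"
  define T where "T = PiM ({0::nat}\<times>{..<n}) (\<lambda>_. (borel :: real measure))"
  define S where "S = PiM Jab (\<lambda>_. (borel :: real measure))"
  define Rf :: "(nat \<times> nat \<Rightarrow> real) \<Rightarrow> nat \<times> nat \<Rightarrow> real" where "Rf y = (\<lambda>q\<in>{0}\<times>{..<n}. \<Sum>k\<in>K. y (k,snd q))" for y
  define Y where "Y \<omega> = Rf (restrict \<omega> JR)" for \<omega> :: "nat \<times> nat \<Rightarrow> real"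
  define X where "X \<omega> = restrict \<omega> Jab" for \<omega> :: "nat \<times> nat \<Rightarrow> real"
  define A where "A = {p\<in>space (T \<Otimes>\<^sub>M S). Fev n i j (\<lambda>l. fst p (0,l)) (snd p)}"
  define cK where "cK = real (card K)"
  have finK: "finite K" by (simp add: K_def)
  have cK: "cK = real m - 2"
  proof -
    have "card K = card {..<m} - card {i,j}" unfolding K_def using ij by (intro card_Diff_subset) auto
    then show ?thesis using ij m by (simp add: cK_def)
  qed
  have cKpos: "cK > 0" using cK m by simp
  have KI: "\<And>k l. k \<in> K \<Longrightarrow> l < n \<Longrightarrow> (k,l) \<in> I" by (auto simp: K_def I_def)
  have II: "\<And>l. l < n \<Longrightarrow> (i,l) \<in> I" "\<And>l. l < n \<Longrightarrow> (j,l) \<in> I" using ij by (auto simp: I_def)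
  have Kne: "K \<noteq> {}" using cK m finK by (auto simp: cK_def)
  have gm: "gauss_matrix m n = PiM I (\<lambda>_. G)" by (simp add: gauss_matrix_def I_def)
  have Rf_meas: "Rf \<in> measurable (PiM JR (\<lambda>_. (borel :: real measure))) T"
    unfolding Rf_def T_def by measurable
  have ind: "P.indep_var T Y S X"
  proof -
    have "P.indep_var T (\<lambda>\<omega>. Rf (restrict \<omega> JR)) S (\<lambda>\<omega>. (\<lambda>x. x) (restrict \<omega> Jab))"
    proof (rule PiG_indep_two[OF _ _ _ Rf_meas])
      show "JR \<inter> Jab = {}" by (auto simp: JR_def Jab_def K_def)
      show "JR \<subseteq> I" by (auto simp: JR_def K_def I_def)
      show "Jab \<subseteq> I" using ij by (auto simp: Jab_def I_def)
      show "(\<lambda>x. x) \<in> measurable (PiM Jab (\<lambda>_. borel)) S" by (simp add: S_def)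
    qed
    moreover have "Y = (\<lambda>\<omega>. Rf (restrict \<omega> JR))" "X = (\<lambda>\<omega>. restrict \<omega> Jab)"
      by (auto simp: Y_def X_def fun_eq_iff)
    ultimately show ?thesis by simp
  qed
  have Ameas: "A \<in> sets (T \<Otimes>\<^sub>M S)"
    unfolding A_def Fev_def T_def S_def by measurable
  have colsum: "(\<Sum>k<m. \<omega> (k,l)) = \<omega> (i,l) + \<omega> (j,l) + (\<Sum>k\<in>K. \<omega> (k,l))" for \<omega> :: "nat \<times> nat \<Rightarrow> real" and l
  proof -
    have "{..<m} = insert i (insert j K)" using ij by (auto simp: K_def)
    moreover have "i \<notin> insert j K" "j \<notin> K" using ij by (auto simp: K_def)
    ultimately show ?thesis using finK by (simp add: add.assoc)
  qed
  have evt1: "row_event m n i \<inter> row_event m n j = {\<omega>\<in>space (PiM I (\<lambda>_. G)). Fev n i j (\<lambda>l. \<Sum>k\<in>K. \<omega> (k,l)) \<omega>}"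
    unfolding row_event_def Fev_def gm by (auto simp: colsum)
  have YT: "Y \<omega> \<in> space T" for \<omega> by (simp add: Y_def Rf_def T_def space_PiM)
  have XS: "X \<omega> \<in> space S" for \<omega> by (simp add: X_def S_def space_PiM)
  have Y0: "Y \<omega> (0,l) = (\<Sum>k\<in>K. \<omega> (k,l))" if "l < n" for \<omega> l
    using that by (simp add: Y_def Rf_def JR_def)
  have evt2: "(Y \<omega>, X \<omega>) \<in> A \<longleftrightarrow> Fev n i j (\<lambda>l. \<Sum>k\<in>K. \<omega> (k,l)) \<omega>" for \<omega>
  proof -
    have "Fev n i j (\<lambda>l. Y \<omega> (0,l)) (X \<omega>) = Fev n i j (\<lambda>l. \<Sum>k\<in>K. \<omega> (k,l)) \<omega>"
      by (rule Fev_cong) (auto simp: Y0 X_def Jab_def)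
    then show ?thesis using YT XS by (simp add: A_def space_pair_measure)
  qed
  have evt: "row_event m n i \<inter> row_event m n j = {\<omega>\<in>space (PiM I (\<lambda>_. G)). (Y \<omega>, X \<omega>) \<in> A}"
    unfolding evt1 evt2 ..
  have slice: "{\<omega>'\<in>space (PiM I (\<lambda>_. G)). (y, X \<omega>') \<in> A} = {\<omega>'\<in>space (PiM I (\<lambda>_. G)). Fev n i j (\<lambda>l. y (0,l)) \<omega>'}"
    if "y \<in> space T" for y
  proof -
    have "Fev n i j (\<lambda>l. y (0,l)) (X \<omega>') = Fev n i j (\<lambda>l. y (0,l)) \<omega>'" for \<omega>'
      by (rule Fev_cong) (auto simp: X_def Jab_def)
    then show ?thesis using that XS by (auto simp: A_def space_pair_measure)
  qed
  define Gd where "Gd = {y\<in>space T. \<bar>(\<Sum>l<n. (y (0,l))^2) - real n * cK\<bar> < e * (real n * cK)}"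
  have Gdmeas: "Gd \<in> sets T" unfolding Gd_def T_def by measurable
  have ncK: "real n * cK > 0" using n cKpos by simp
  have Ybad: "P.prob {\<omega>\<in>space (PiM I (\<lambda>_. G)). Y \<omega> \<notin> Gd} \<le> 2 / (e^2 * real n)"
  proof -
    have "{\<omega>\<in>space (PiM I (\<lambda>_. G)). Y \<omega> \<notin> Gd} =
      {\<omega>\<in>space (PiM I (\<lambda>_. G)). \<bar>(\<Sum>l<n. (\<Sum>k\<in>K. \<omega> (k,l))^2) - real n * real (card K)\<bar> \<ge> e * (real n * cK)}"
      using YT by (auto simp: Gd_def Y0 cK_def)
    also have "P.prob \<dots> \<le> 2 * real n * (real (card K))^2 / (e * (real n * cK))^2"
      by (rule PiG_R_dev[OF finK Kne KI]) (use e ncK in auto)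
    also have "\<dots> = 2 / (e^2 * real n)"
      using e n cKpos by (simp add: cK_def power2_eq_square divide_simps)
    finally show ?thesis .
  qed
  have Gdpos: "(1-e) * (real n * cK) < (\<Sum>l<n. (y (0,l))^2)" "(\<Sum>l<n. (y (0,l))^2) < (1+e) * (real n * cK)"
    if "y \<in> Gd" for y
    using that unfolding Gd_def abs_less_iff by (auto simp: algebra_simps)
  have pos1: "(1-e) * (real n * cK) > 0" using e ncK by simp
  show "measure (gauss_matrix m n) (row_event m n i \<inter> row_event m n j)
      \<le> (Phi ((1+d) * real n / sqrt ((1-e) * (real n * (real m - 2)))))^2 + 20 / (d^2 * real n) + 2 / (e^2 * real n)"
  proof -
    let ?u = "(Phi ((1+d) * real n / sqrt ((1-e) * (real n * cK))))^2 + 20 / (d^2 * real n)"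
    have "P.prob {\<omega>\<in>space (PiM I (\<lambda>_. G)). (Y \<omega>, X \<omega>) \<in> A} \<le> ?u + P.prob {\<omega>\<in>space (PiM I (\<lambda>_. G)). Y \<omega> \<notin> Gd}"
    proof (rule P.freeze_upper[OF ind Ameas Gdmeas])
      show "0 \<le> ?u" using d n by (simp add: Phi_nonneg)
      fix y assume yT: "y \<in> space T" and yG: "y \<in> Gd"
      have Q: "(1-e) * (real n * cK) < (\<Sum>l<n. (y (0,l))^2)" using Gdpos(1)[OF yG] .
      have Qpos: "(\<Sum>l<n. (y (0,l))^2) > 0" using Q pos1 by linarith
      have "P.prob {\<omega>'\<in>space (PiM I (\<lambda>_. G)). (y, X \<omega>') \<in> A} = P.prob {\<omega>'\<in>space (PiM I (\<lambda>_. G)). Fev n i j (\<lambda>l. y (0,l)) \<omega>'}"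
        by (simp add: slice[OF yT])
      also have "\<dots> \<le> (Phi ((1+d) * real n / sqrt (\<Sum>l<n. (y (0,l))^2)))^2 + 20 / (d^2 * real n)"
        by (rule inner_upper[OF II ij(3) Qpos d(1) n])
      also have "\<dots> \<le> ?u"
      proof -
        have "sqrt ((1-e) * (real n * cK)) \<le> sqrt (\<Sum>l<n. (y (0,l))^2)" using Q by simp
        then have "(1+d) * real n / sqrt (\<Sum>l<n. (y (0,l))^2) \<le> (1+d) * real n / sqrt ((1-e) * (real n * cK))"
          using pos1 d by (intro divide_left_mono) auto
        then show ?thesis by (intro add_mono order_refl power_mono Phi_mono Phi_nonneg)
      qed
      finally show "P.prob {\<omega>'\<in>space (PiM I (\<lambda>_. G)). (y, X \<omega>') \<in> A} \<le> ?u" .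
    qed
    then show ?thesis using Ybad unfolding gm evt cK by linarith
  qed
  show "(Phi ((1-d) * real n / sqrt ((1+e) * (real n * (real m - 2)))))^2 - 20 / (d^2 * real n) - 2 / (e^2 * real n)
      \<le> measure (gauss_matrix m n) (row_event m n i \<inter> row_event m n j)"
  proof -
    let ?l = "(Phi ((1-d) * real n / sqrt ((1+e) * (real n * cK))))^2 - 20 / (d^2 * real n)"
    have "?l - P.prob {\<omega>\<in>space (PiM I (\<lambda>_. G)). Y \<omega> \<notin> Gd} \<le> P.prob {\<omega>\<in>space (PiM I (\<lambda>_. G)). (Y \<omega>, X \<omega>) \<in> A}"
    proof (rule P.freeze_lower[OF ind Ameas Gdmeas])
      have "(Phi ((1-d) * real n / sqrt ((1+e) * (real n * cK))))^2 \<le> 1"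
        using Phi_nonneg Phi_le1 by (simp add: power_le_one)
      then show "?l \<le> 1" using d n by (smt (verit) divide_nonneg_nonneg mult_nonneg_nonneg of_nat_0_le_iff zero_le_power2)
      fix y assume yT: "y \<in> space T" and yG: "y \<in> Gd"
      have Q1: "(1-e) * (real n * cK) < (\<Sum>l<n. (y (0,l))^2)" using Gdpos(1)[OF yG] .
      have Q2: "(\<Sum>l<n. (y (0,l))^2) < (1+e) * (real n * cK)" using Gdpos(2)[OF yG] .
      have Qpos: "(\<Sum>l<n. (y (0,l))^2) > 0" using Q1 pos1 by linarith
      have "?l \<le> (Phi ((1-d) * real n / sqrt (\<Sum>l<n. (y (0,l))^2)))^2 - 20 / (d^2 * real n)"
      proof -
        have "sqrt (\<Sum>l<n. (y (0,l))^2) \<le> sqrt ((1+e) * (real n * cK))" using Q2 by simp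
        then have "(1-d) * real n / sqrt ((1+e) * (real n * cK)) \<le> (1-d) * real n / sqrt (\<Sum>l<n. (y (0,l))^2)"
          using Qpos d by (intro divide_left_mono) auto
        then show ?thesis by (intro diff_mono order_refl power_mono Phi_mono Phi_nonneg)
      qed
      also have "\<dots> \<le> P.prob {\<omega>'\<in>space (PiM I (\<lambda>_. G)). Fev n i j (\<lambda>l. y (0,l)) \<omega>'}"
        by (rule inner_lower[OF II ij(3) Qpos d(1) n])
      also have "\<dots> = P.prob {\<omega>'\<in>space (PiM I (\<lambda>_. G)). (y, X \<omega>') \<in> A}"
        by (simp add: slice[OF yT])
      finally show "?l \<le> P.prob {\<omega>'\<in>space (PiM I (\<lambda>_. G)). (y, X \<omega>') \<in> A}" .
    qed
    then show ?thesis using Ybad unfolding gm evt cK by linarith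
  qed
qed




lemma Phi_integral: "Phi x = (LBINT s:{-x..}. std_normal_density s)"
proof -
  interpret prob_space G by (rule prob_G)
  have "Phi x = integral\<^sup>L G (indicator {-x..})"
    unfolding Phi_def by (simp add: emeasure_eq_measure)
  also have "\<dots> = (\<integral>s. std_normal_density s *\<^sub>R indicator {-x..} s \<partial>lborel)"
    by (rule integral_density) auto
  also have "\<dots> = (LBINT s:{-x..}. std_normal_density s)"
    by (simp add: set_lebesgue_integral_def mult.commute)
  finally show ?thesis .
qed

lemma std_normal_scaled: "std_normal_density (sqrt 2 * t) = exp (- (t^2)) / sqrt (2 * pi)"
  by (simp add: std_normal_density_def power_mult_distrib)

lemma set_integral_scale_sqrt2:
  "(LBINT s:S. std_normal_density s) = (1 / sqrt pi) * (LBINT t:{t. sqrt 2 * t \<in> S}. exp (- (t^2)))"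
proof -
  have "(LBINT s:S. std_normal_density s) = (\<integral>s. indicator S s * std_normal_density s \<partial>lborel)"
    by (simp add: set_lebesgue_integral_def)
  also have "\<dots> = \<bar>sqrt 2\<bar> *\<^sub>R (\<integral>t. indicator S (0 + sqrt 2 * t) * std_normal_density (0 + sqrt 2 * t) \<partial>lborel)"
    by (rule lborel_integral_real_affine) simp
  also have "(\<lambda>t. indicator S (0 + sqrt 2 * t) * std_normal_density (0 + sqrt 2 * t))
      = (\<lambda>t. (1 / sqrt (2 * pi)) * (indicator {t. sqrt 2 * t \<in> S} t * exp (- (t^2))))"
    by (auto simp: std_normal_scaled indicator_def fun_eq_iff)
  also have "\<bar>sqrt 2\<bar> *\<^sub>R (\<integral>t. (1 / sqrt (2 * pi)) * (indicator {t. sqrt 2 * t \<in> S} t * exp (- (t^2))) \<partial>lborel)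
      = (1 / sqrt pi) * (\<integral>t. indicator {t. sqrt 2 * t \<in> S} t * exp (- (t^2)) \<partial>lborel)"
    by (simp add: real_sqrt_mult)
  finally show ?thesis by (simp add: set_lebesgue_integral_def)
qed

lemma half_normal: "(LBINT s:{0<..}. std_normal_density s) = 1/2"
proof -
  have S: "{t. sqrt 2 * t \<in> {0<..}} = {0<..}" by (auto simp: zero_less_mult_iff)
  have "(LBINT t:{0<..}. exp (- (t^2))) = (LBINT t:{0::real..}. exp (- (t^2)))"
    by (rule set_integral_discrete_difference[where X="{0::real}"]) (auto simp: less_le)
  also have "\<dots> = sqrt pi / 2"
    using gaussian_moment_0 by (simp add: set_lebesgue_integral_def has_bochner_integral_integral_eq)
  finally have g: "(LBINT t:{0<..}. exp (- (t^2))) = sqrt pi / 2" .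
  have "(LBINT s:{0<..}. std_normal_density s) = (1 / sqrt pi) * (LBINT t:{t. sqrt 2 * t \<in> {0<..}}. exp (- (t^2)))"
    by (rule set_integral_scale_sqrt2)
  also have "\<dots> = (1 / sqrt pi) * (LBINT t:{0<..}. exp (- (t^2)))" by (simp only: S)
  finally show ?thesis by (simp add: g)
qed

lemma erfc_neg:
  assumes "a \<ge> 0"
  shows "erfc (-a) = 1 + 2 / sqrt pi * (LBINT t:{-a..0}. exp (- (t^2)))"
proof -
  have "(LBINT t=ereal 0..ereal (-a). exp (- (t^2))) = - (LBINT t=ereal (-a)..ereal 0. exp (- (t^2)))"
    by (rule interval_integral_endpoints_reverse)
  also have "(LBINT t=ereal (-a)..ereal 0. exp (- (t^2))) = (LBINT t:{-a..0}. exp (- (t^2)))"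
    using assms by (intro interval_integral_Icc) simp
  finally show ?thesis unfolding erfc_def by simp
qed

lemma Phi_erfc:
  assumes y: "y \<ge> 0"
  shows "Phi y = erfc (- (y / sqrt 2)) / 2"
proof -
  have int: "set_integrable lborel A std_normal_density" if "A \<in> sets lborel" for A
    unfolding set_integrable_def using that by (intro integrable_mult_indicator) auto
  have "Phi y = (LBINT s:{-y..0} \<union> {0<..}. std_normal_density s)"
  proof -
    have "{-y..} = {-y..0} \<union> {0<..}" using y by auto
    then show ?thesis by (simp add: Phi_integral)
  qed
  also have "\<dots> = (LBINT s:{-y..0}. std_normal_density s) + (LBINT s:{0<..}. std_normal_density s)"
    by (rule set_integral_Un) (auto intro: int)
  also have "(LBINT s:{-y..0}. std_normal_density s) = (1 / sqrt pi) * (LBINT t:{-(y / sqrt 2)..0}. exp (- (t^2)))"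
  proof -
    have "{t. sqrt 2 * t \<in> {-y..0}} = {-(y / sqrt 2)..0}"
      by (auto simp: field_simps mult_le_0_iff)
    then show ?thesis by (simp add: set_integral_scale_sqrt2)
  qed
  finally have h: "Phi y = (1 / sqrt pi) * (LBINT t:{-(y / sqrt 2)..0}. exp (- (t^2))) + 1/2"
    by (simp add: half_normal)
  have e: "erfc (- (y / sqrt 2)) = 1 + 2 / sqrt pi * (LBINT t:{-(y / sqrt 2)..0}. exp (- (t^2)))"
    using erfc_neg[of "y / sqrt 2"] y by simp
  show ?thesis unfolding h e by (simp add: add_divide_distrib)
qed




lemma G_point: "measure G {z} = 0"
proof -
  have m: "(\<lambda>x. ennreal (std_normal_density x)) \<in> borel_measurable lborel" by simp
  have "{z} \<in> null_sets G"
  proof -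
    have "AE x in lborel. x \<in> {z} \<longrightarrow> ennreal (std_normal_density x) = 0"
      by (rule eventually_mono[OF AE_lborel_singleton[of z]]) auto
    then show ?thesis unfolding null_sets_density_iff[OF m] by simp
  qed
  then show ?thesis by (simp add: measure_def null_setsD1)
qed

lemma Phi_cdf: "Phi x = 1 - cdf G (-x)"
proof -
  interpret prob_space G by (rule prob_G)
  have "{-x..} = UNIV - {..-x} \<union> {-x}" by auto
  have "measure G {..-x} + measure G {-x<..} = measure G ({..-x} \<union> {-x<..})"
    by (rule finite_measure_Union[symmetric]) auto
  also have "{..-x} \<union> {-x<..} = space G" by auto
  moreover have "prob UNIV = 1" using prob_space by simp
  ultimately have a: "measure G {..-x} + measure G {-x<..} = 1" by simp
  have "measure G {-x..} = measure G ({-x} \<union> {-x<..})"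
    by (rule arg_cong[where f="measure G"]) auto
  also have "\<dots> = measure G {-x} + measure G {-x<..}"
    by (rule finite_measure_Union) auto
  finally show ?thesis using a G_point by (simp add: Phi_def cdf_def)
qed

lemma Phi_cont: "isCont Phi x"
proof -
  interpret real_distribution G
  proof (rule real_distribution.intro)
    show "prob_space G" by (rule prob_G)
    show "real_distribution_axioms G" by unfold_locales simp
  qed
  have "isCont (cdf G) (-x)" using G_point by (simp add: isCont_cdf)
  then have "isCont (\<lambda>x. 1 - cdf G (-x)) x"
    by (intro continuous_intros) (auto intro: continuous_at_compose[where f=uminus, unfolded o_def])
  then show ?thesis by (simp add: Phi_cdf[abs_def])
qed




lemma q_lim: "((\<lambda>x::real. x powr (-1/4)) \<longlongrightarrow> 0) at_top"
  by (rule tendsto_neg_powr) (auto simp: filterlim_ident)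

lemma inv_lim: "((\<lambda>x::real. 2 / x) \<longlongrightarrow> 0) at_top"
  by (rule tendsto_divide_0[OF tendsto_const]) (rule filterlim_at_top_imp_at_infinity[OF filterlim_ident])

lemma fu_eq:
  assumes c: "c > 0" and x: "x > 0" "c * x - 2 > 0"
  shows "a * x / sqrt (b * (x * (c*x - 2))) = a / sqrt (b * (c - 2 / x))"
proof -
  have e: "b * (x * (c*x - 2)) = x^2 * (b * (c - 2 / x))"
    using x by (simp add: field_simps power2_eq_square)
  have "sqrt (b * (x * (c*x - 2))) = sqrt (x^2) * sqrt (b * (c - 2 / x))"
    unfolding e by (rule real_sqrt_mult)
  also have "sqrt (x^2) = x" using x by simp
  finally show ?thesis using x by simp
qed

lemma lim_gen:
  assumes c: "c > 0" and A: "(A \<longlongrightarrow> 1) at_top" and B: "(B \<longlongrightarrow> 1) at_top"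
  shows "((\<lambda>x::real. A x * x / sqrt (B x * (x * (c*x - 2)))) \<longlongrightarrow> inverse (c powr (1/2))) at_top"
proof -
  have ev: "eventually (\<lambda>x::real. x > 0 \<and> c * x - 2 > 0) at_top"
    using eventually_gt_at_top[of 0] eventually_gt_at_top[of "2 / c"]
    by eventually_elim (use c in \<open>auto simp: field_simps\<close>)
  have l0: "((\<lambda>x::real. A x / sqrt (B x * (c - 2 / x))) \<longlongrightarrow> 1 / sqrt (1 * (c - 0))) at_top"
    by (intro tendsto_intros A B inv_lim) (use c in simp)
  have v: "1 / sqrt (1 * (c - 0)) = inverse (c powr (1/2))"
    using c by (simp add: powr_half_sqrt inverse_eq_divide)
  have l1: "((\<lambda>x::real. A x / sqrt (B x * (c - 2 / x))) \<longlongrightarrow> inverse (c powr (1/2))) at_top"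
    using l0 unfolding v .
  have evq: "eventually (\<lambda>x::real. A x / sqrt (B x * (c - 2 / x)) = A x * x / sqrt (B x * (x * (c*x - 2)))) at_top"
    using ev
  proof eventually_elim
    case (elim x)
    then show ?case using fu_eq[OF c, of x "A x" "B x"] by simp
  qed
  show ?thesis by (rule tendsto_cong[THEN iffD1, OF evq l1])
qed

lemma qp_lim: "((\<lambda>x::real. 1 + x powr (-1/4)) \<longlongrightarrow> 1) at_top"
  using tendsto_add[OF tendsto_const[of "1::real"] q_lim] by simp

lemma qm_lim: "((\<lambda>x::real. 1 - x powr (-1/4)) \<longlongrightarrow> 1) at_top"
  using tendsto_diff[OF tendsto_const[of "1::real"] q_lim] by simp

lemma lim_fu: "c > 0 \<Longrightarrow> ((\<lambda>x::real. (1 + x powr (-1/4)) * x / sqrt ((1 - x powr (-1/4)) * (x * (c*x - 2)))) \<longlongrightarrow> inverse (c powr (1/2))) at_top"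
  by (rule lim_gen[OF _ qp_lim qm_lim])

lemma lim_fl: "c > 0 \<Longrightarrow> ((\<lambda>x::real. (1 - x powr (-1/4)) * x / sqrt ((1 + x powr (-1/4)) * (x * (c*x - 2)))) \<longlongrightarrow> inverse (c powr (1/2))) at_top"
  by (rule lim_gen[OF _ qm_lim qp_lim])

lemma lim_er: "((\<lambda>x::real. 22 / ((x powr (-1/4))^2 * x)) \<longlongrightarrow> 0) at_top"
proof -
  have "((\<lambda>x::real. 22 * (x powr (-(1/2)))) \<longlongrightarrow> 22 * 0) at_top"
    by (intro tendsto_intros tendsto_neg_powr) (auto simp: filterlim_ident)
  then have l: "((\<lambda>x::real. 22 * (x powr (-(1/2)))) \<longlongrightarrow> 0) at_top" by (simp only: mult_zero_right)
  have eq: "22 * (x powr (-(1/2))) = 22 / ((x powr (-1/4))^2 * x)" if "x > 0" for x :: real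
  proof -
    have "(x powr (-1/4))^2 * x = x powr (-1/4) * x powr (-1/4) * x powr 1"
      using that by (simp add: power2_eq_square)
    also have "\<dots> = x powr (-1/4 + -1/4 + 1)"
      by (simp only: powr_add)
    also have "\<dots> = x powr (1/2)" by simp
    finally have "(x powr (-1/4))^2 * x = x powr (1/2)" .
    moreover have "x powr (-(1/2)) = 1 / x powr (1/2)" by (rule powr_minus_divide)
    ultimately show ?thesis by simp
  qed
  have evq: "eventually (\<lambda>x::real. 22 * (x powr (-(1/2))) = 22 / ((x powr (-1/4))^2 * x)) at_top"
    using eventually_gt_at_top[of 0]
  proof eventually_elim
    case (elim x)
    then show ?case by (rule eq)
  qed
  show ?thesis by (rule tendsto_cong[THEN iffD1, OF evq l])
qed



lemma limit_core:
  fixes F :: "real \<Rightarrow> real" and p :: "nat \<Rightarrow> real" and N :: "nat \<Rightarrow> nat"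
  assumes c: "c > 0" and F: "isCont F (1 / sqrt c)" and N: "filterlim N at_top sequentially"
    and ev: "eventually (\<lambda>t. \<forall>d. 0 < d \<and> d < 1 \<longrightarrow>
        (F ((1-d) * real (N t) / sqrt ((1+d) * (real (N t) * (c * real (N t) - 2)))))^2 - 22 / (d^2 * real (N t)) \<le> p t
      \<and> p t \<le> (F ((1+d) * real (N t) / sqrt ((1-d) * (real (N t) * (c * real (N t) - 2)))))^2 + 22 / (d^2 * real (N t))) sequentially"
  shows "p \<longlonglongrightarrow> (F (1 / sqrt c))^2"
proof -
  have RN: "filterlim (\<lambda>t. real (N t)) at_top sequentially"
    by (rule filterlim_compose[OF filterlim_real_sequentially N])
  define fu where "fu x = (1 + x powr (-1/4)) * x / sqrt ((1 - x powr (-1/4)) * (x * (c*x - 2)))" for x :: real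
  define fl where "fl x = (1 - x powr (-1/4)) * x / sqrt ((1 + x powr (-1/4)) * (x * (c*x - 2)))" for x :: real
  define er where "er x = 22 / ((x powr (-1/4))^2 * x)" for x :: real
  have sc0: "c powr (1/2) = sqrt c" by (rule powr_half_sqrt) (use c in simp)
  have sc: "inverse (c powr (1/2)) = 1 / sqrt c" by (simp only: sc0 inverse_eq_divide)
  have lu: "(fu \<longlongrightarrow> 1 / sqrt c) at_top"
    using lim_fu[OF c] unfolding fu_def[abs_def] sc .
  have ll: "(fl \<longlongrightarrow> 1 / sqrt c) at_top"
    using lim_fl[OF c] unfolding fl_def[abs_def] sc .
  have le: "(er \<longlongrightarrow> 0) at_top" unfolding er_def[abs_def] by (rule lim_er)
  have U: "(\<lambda>t. (F (fu (real (N t))))^2 + er (real (N t))) \<longlonglongrightarrow> (F (1 / sqrt c))^2 + 0"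
    by (intro tendsto_intros isCont_tendsto_compose[OF F] filterlim_compose[OF lu RN] filterlim_compose[OF le RN])
  have L: "(\<lambda>t. (F (fl (real (N t))))^2 - er (real (N t))) \<longlonglongrightarrow> (F (1 / sqrt c))^2 - 0"
    by (intro tendsto_intros isCont_tendsto_compose[OF F] filterlim_compose[OF ll RN] filterlim_compose[OF le RN])
  have ev2: "eventually (\<lambda>t. real (N t) \<ge> 2) sequentially"
    using RN unfolding filterlim_at_top by (rule spec)
  have evb: "eventually (\<lambda>t. (F (fl (real (N t))))^2 - er (real (N t)) \<le> p t \<and>
      p t \<le> (F (fu (real (N t))))^2 + er (real (N t))) sequentially"
    using ev ev2
  proof eventually_elim
    case (elim t)
    define x where "x = real (N t)"
    have x2: "x \<ge> 2" using elim(2) by (simp add: x_def)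
    have d0: "0 < x powr (-1/4)" using x2 by simp
    have d1: "x powr (-1/4) < 1"
    proof -
      have "x powr (-1/4) < x powr 0" using x2 by (intro powr_less_mono) auto
      then show ?thesis using x2 by simp
    qed
    have dd: "0 < real (N t) powr (-1/4) \<and> real (N t) powr (-1/4) < 1" using d0 d1 by (simp only: x_def)
    from elim(1)[rule_format, OF dd]
    show ?case unfolding fu_def fl_def er_def .
  qed
  have L': "(\<lambda>t. (F (fl (real (N t))))^2 - er (real (N t))) \<longlonglongrightarrow> (F (1 / sqrt c))^2"
    using L by (simp only: diff_zero)
  have U': "(\<lambda>t. (F (fu (real (N t))))^2 + er (real (N t))) \<longlonglongrightarrow> (F (1 / sqrt c))^2"
    using U by (simp only: add_0_right)
  have e1: "eventually (\<lambda>t. (F (fl (real (N t))))^2 - er (real (N t)) \<le> p t) sequentially"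
    using evb by (rule eventually_mono) (rule conjunct1)
  have e2: "eventually (\<lambda>t. p t \<le> (F (fu (real (N t))))^2 + er (real (N t))) sequentially"
    using evb by (rule eventually_mono) (rule conjunct2)
  show ?thesis by (rule tendsto_sandwich[OF e1 e2 L' U'])
qed




theorem lemma4:
  fixes c :: real and i j :: nat and m n :: "nat \<Rightarrow> nat"
  assumes "c > 0" and "i \<noteq> j"
    and "filterlim m at_top sequentially" and "filterlim n at_top sequentially"
    and "\<And>t. real (m t) = c * real (n t)"
  shows "(\<lambda>t. measure (gauss_matrix (m t) (n t))
              (row_event (m t) (n t) i \<inter> row_event (m t) (n t) j))
         \<longlonglongrightarrow> 1/4 * (erfc (- 1 / sqrt (2 * c)))^2"
proof -
  note c = assms(1) and ij = assms(2) and mlim = assms(3) and nlim = assms(4) and mn = assms(5)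
  have ev1: "eventually (\<lambda>t. max i j + 3 \<le> m t) sequentially"
    using mlim unfolding filterlim_at_top by (rule spec)
  have ev2: "eventually (\<lambda>t. 1 \<le> n t) sequentially"
    using nlim unfolding filterlim_at_top by (rule spec)
  have ev: "eventually (\<lambda>t. \<forall>d. 0 < d \<and> d < 1 \<longrightarrow>
        (Phi ((1-d) * real (n t) / sqrt ((1+d) * (real (n t) * (c * real (n t) - 2)))))^2 - 22 / (d^2 * real (n t))
          \<le> measure (gauss_matrix (m t) (n t)) (row_event (m t) (n t) i \<inter> row_event (m t) (n t) j)
      \<and> measure (gauss_matrix (m t) (n t)) (row_event (m t) (n t) i \<inter> row_event (m t) (n t) j)
          \<le> (Phi ((1+d) * real (n t) / sqrt ((1-d) * (real (n t) * (c * real (n t) - 2)))))^2 + 22 / (d^2 * real (n t))) sequentially"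
    using ev1 ev2
  proof eventually_elim
    case (elim t)
    show ?case
    proof (intro allI impI)
      fix d :: real assume d: "0 < d \<and> d < 1"
      have h1: "i < m t" "j < m t" "3 \<le> m t" "0 < n t" using elim by auto
      have d1: "0 < d" and d2: "d < 1" using d by auto
      note B = main_bounds[OF h1(1,2) ij h1(3,4) d1 d2 d1 d2]
      have e22: "20 / (d^2 * real (n t)) + 2 / (d^2 * real (n t)) = 22 / (d^2 * real (n t))"
        using add_divide_distrib[of "20::real" 2 "d^2 * real (n t)"] by simp
      show "(Phi ((1-d) * real (n t) / sqrt ((1+d) * (real (n t) * (c * real (n t) - 2)))))^2 - 22 / (d^2 * real (n t))
          \<le> measure (gauss_matrix (m t) (n t)) (row_event (m t) (n t) i \<inter> row_event (m t) (n t) j)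
        \<and> measure (gauss_matrix (m t) (n t)) (row_event (m t) (n t) i \<inter> row_event (m t) (n t) j)
          \<le> (Phi ((1+d) * real (n t) / sqrt ((1-d) * (real (n t) * (c * real (n t) - 2)))))^2 + 22 / (d^2 * real (n t))"
        using B(2)[unfolded mn diff_diff_eq e22] B(1)[unfolded mn add.assoc e22] by (rule conjI)
    qed
  qed
  have lim: "(\<lambda>t. measure (gauss_matrix (m t) (n t)) (row_event (m t) (n t) i \<inter> row_event (m t) (n t) j))
      \<longlonglongrightarrow> (Phi (1 / sqrt c))^2"
    by (rule limit_core[OF c Phi_cont nlim ev])
  have "Phi (1 / sqrt c) = erfc (- (1 / sqrt c / sqrt 2)) / 2"
    by (rule Phi_erfc) (use c in simp)
  also have "1 / sqrt c / sqrt 2 = 1 / sqrt (2 * c)"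
    by (simp only: real_sqrt_mult divide_divide_eq_left mult.commute)
  finally have e: "Phi (1 / sqrt c) = erfc (- (1 / sqrt (2 * c))) / 2" .
  have m1: "- 1 / sqrt (2 * c) = - (1 / sqrt (2 * c))" by (rule minus_divide_left[symmetric])
  have fin: "(Phi (1 / sqrt c))^2 = 1/4 * (erfc (- 1 / sqrt (2 * c)))^2"
    unfolding e m1 by (simp add: power2_eq_square)
  show ?thesis using lim unfolding fin .
qed


end
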